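(* Let $G=(V,E)$ be a finite connected undirected graph with probability weights $w:E\to\mathbb{R}_{>0}$ and degree weights $\omega:E\to\mathbb{R}$, and let $r\in V$ be arbitrary. Let $T$ be a random spanning tree of $G$ with $\Pr(T)\propto\prod_{e\in E_T}w(e)$. For a node $v\in V$, $$\mathbb{E}\big[\deg^{\omega}_T(v)\big]=\operatorname{Tr}\Big[\big(L^{(1)}_v\big)^{[r]}\big(L_G^{[r]}\big)^{-1}\Big],$$ $$\operatorname{Var}\big[\deg^{\omega}_T(v)\big]=\operatorname{Tr}\Big[\Big(\big(L^{(2)}_v\big)^{[r]}-\big(L^{(1)}_v\big)^{[r]}\big(L_G^{[r]}\big)^{-1}\big(L^{(1)}_v\big)^{[r]}\Big)\big(L_G^{[r]}\big)^{-1}\Big].$$ Moreover, for a second node $u\in V$, $u\neq v$, $$\operatorname{Cov}\big(\deg^{\omega}_T(v),\deg^{\omega}_T(u)\big)=\operatorname{Tr}\Big[\Big(\big(L^{(2)}_{vu}\big)^{[r]}-\big(L^{(1)}_v\big)^{[r]}\big(L_G^{[r]}\big)^{-1}\big(L^{(1)}_u\big)^{[r]}\Big)\big(L_G^{[r]}\big)^{-1}\Big].$$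
   Context: For an edge weight function $c:E\to\mathbb{R}$ on $G$, its Laplacian is $L=D-A$ where $A_{ij}=c(\{i,j\})$ (zero if $\{i,j\}\notin E$) and $D$ is diagonal with $D_{ii}=\sum_j A_{ij}$. $L_G$ is the Laplacian for the weights $w$. For a node $v$ and $p\in\{1,2\}$, $L^{(p)}_v$ is the Laplacian for the weights $c(e)=w(e)\omega(e)^p$ if $v\in e$ and $c(e)=0$ otherwise (i.e. only edges incident to $v$ kept, with weights scaled by $\omega^p$). $L^{(2)}_{vu}$ is the Laplacian for the weights $c(\{u,v\})=w(\{u,v\})\omega(\{u,v\})^2$ and $c(e)=0$ for all other edges (the zero matrix if $\{u,v\}\notin E$). For a matrix $M$ indexed by $V$, $M^{[r]}$ is $M$ with the row and column indexed by $r$ removed. The weighted degree of $v$ in $T$ is $\deg^{\omega}_T(v)=\sum_{e\in E_T,\, v\in e}\omega(e)$, and $\operatorname{Tr}$ is the trace. *)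

theory Defs
  imports Complex_Main
begin

definition simple_graph :: "'a set \<Rightarrow> 'a set set \<Rightarrow> bool" where
  "simple_graph V E \<longleftrightarrow> finite V \<and> (\<forall>e\<in>E. \<exists>x y. x \<in> V \<and> y \<in> V \<and> x \<noteq> y \<and> e = {x, y})"

definition adj :: "'a set set \<Rightarrow> 'a \<Rightarrow> 'a \<Rightarrow> bool" where
  "adj F x y \<longleftrightarrow> {x, y} \<in> F"

definition connected_on :: "'a set \<Rightarrow> 'a set set \<Rightarrow> bool" where
  "connected_on V F \<longleftrightarrow> (\<forall>x\<in>V. \<forall>y\<in>V. (adj F)\<^sup>*\<^sup>* x y)"

definition acyclic_edges :: "'a set set \<Rightarrow> bool" where
  "acyclic_edges F \<longleftrightarrow> (\<forall>x y. {x, y} \<in> F \<longrightarrow> \<not> (adj (F - {{x, y}}))\<^sup>*\<^sup>* x y)"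

definition spanning_trees :: "'a set \<Rightarrow> 'a set set \<Rightarrow> 'a set set set" where
  "spanning_trees V E = {T. T \<subseteq> E \<and> connected_on V T \<and> acyclic_edges T}"

definition tree_weight :: "('a set \<Rightarrow> real) \<Rightarrow> 'a set set \<Rightarrow> real" where
  "tree_weight w T = (\<Prod>e\<in>T. w e)"

definition rst_expectation :: "'a set \<Rightarrow> 'a set set \<Rightarrow> ('a set \<Rightarrow> real) \<Rightarrow> ('a set set \<Rightarrow> real) \<Rightarrow> real" where
  "rst_expectation V E w f =
     (\<Sum>T\<in>spanning_trees V E. tree_weight w T * f T) / (\<Sum>T\<in>spanning_trees V E. tree_weight w T)"

definition rst_variance :: "'a set \<Rightarrow> 'a set set \<Rightarrow> ('a set \<Rightarrow> real) \<Rightarrow> ('a set set \<Rightarrow> real) \<Rightarrow> real" where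
  "rst_variance V E w f = rst_expectation V E w (\<lambda>T. (f T - rst_expectation V E w f)\<^sup>2)"

definition rst_covariance :: "'a set \<Rightarrow> 'a set set \<Rightarrow> ('a set \<Rightarrow> real) \<Rightarrow> ('a set set \<Rightarrow> real) \<Rightarrow> ('a set set \<Rightarrow> real) \<Rightarrow> real" where
  "rst_covariance V E w f g =
     rst_expectation V E w (\<lambda>T. (f T - rst_expectation V E w f) * (g T - rst_expectation V E w g))"

definition wdeg :: "('a set \<Rightarrow> real) \<Rightarrow> 'a set set \<Rightarrow> 'a \<Rightarrow> real" where
  "wdeg \<omega> T v = (\<Sum>e\<in>{e\<in>T. v \<in> e}. \<omega> e)"

(* Matrices indexed by a finite set: functions 'a => 'a => real; only entries with
   both indices in the index set S are meaningful. *)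
type_synonym 'a smat = "'a \<Rightarrow> 'a \<Rightarrow> real"

definition laplacian :: "'a set \<Rightarrow> 'a set set \<Rightarrow> ('a set \<Rightarrow> real) \<Rightarrow> 'a smat" where
  "laplacian V E c = (\<lambda>i j.
     let A = (\<lambda>i j. if {i, j} \<in> E then c {i, j} else 0)
     in (if i = j then (\<Sum>k\<in>V. A i k) else 0) - A i j)"

definition lap_G :: "'a set \<Rightarrow> 'a set set \<Rightarrow> ('a set \<Rightarrow> real) \<Rightarrow> 'a smat" where
  "lap_G V E w = laplacian V E w"

definition lap_v :: "'a set \<Rightarrow> 'a set set \<Rightarrow> ('a set \<Rightarrow> real) \<Rightarrow> ('a set \<Rightarrow> real) \<Rightarrow> nat \<Rightarrow> 'a \<Rightarrow> 'a smat" where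
  "lap_v V E w \<omega> p v = laplacian V E (\<lambda>e. if v \<in> e then w e * \<omega> e ^ p else 0)"

definition lap_vu :: "'a set \<Rightarrow> 'a set set \<Rightarrow> ('a set \<Rightarrow> real) \<Rightarrow> ('a set \<Rightarrow> real) \<Rightarrow> 'a \<Rightarrow> 'a \<Rightarrow> 'a smat" where
  "lap_vu V E w \<omega> v u = laplacian V E (\<lambda>e. if e = {u, v} then w e * \<omega> e ^ 2 else 0)"

(* Matrix operations on matrices indexed by S (S = V - {r} realises M^[r]) *)
definition smat_mult :: "'a set \<Rightarrow> 'a smat \<Rightarrow> 'a smat \<Rightarrow> 'a smat" where
  "smat_mult S M N = (\<lambda>i j. \<Sum>k\<in>S. M i k * N k j)"

definition smat_minus :: "'a smat \<Rightarrow> 'a smat \<Rightarrow> 'a smat" where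
  "smat_minus M N = (\<lambda>i j. M i j - N i j)"

definition smat_trace :: "'a set \<Rightarrow> 'a smat \<Rightarrow> real" where
  "smat_trace S M = (\<Sum>i\<in>S. M i i)"

definition smat_inv :: "'a set \<Rightarrow> 'a smat \<Rightarrow> 'a smat" where
  "smat_inv S M = (THE N. (\<forall>i\<in>S. \<forall>j\<in>S. (\<Sum>k\<in>S. M i k * N k j) = (if i = j then 1 else 0))
                        \<and> (\<forall>i j. i \<notin> S \<or> j \<notin> S \<longrightarrow> N i j = 0))"

end

theory Submission
  imports Defs "Jordan_Normal_Form.Determinant" "HOL-Library.FuncSet"
begin

definition sdet :: "'a set \<Rightarrow> 'a smat \<Rightarrow> real" where
  "sdet S M = (\<Sum>\<sigma>\<in>{\<sigma>. \<sigma> permutes S}. real_of_int (sign \<sigma>) * (\<Prod>i\<in>S. M i (\<sigma> i)))"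

lemma sdet_cong:
  assumes "\<And>i j. i \<in> S \<Longrightarrow> j \<in> S \<Longrightarrow> M i j = N i j"
  shows "sdet S M = sdet S N"
  unfolding sdet_def
proof (intro sum.cong refl)
  fix \<sigma> assume "\<sigma> \<in> {\<sigma>. \<sigma> permutes S}"
  then have "\<sigma> permutes S" by simp
  then have "\<And>i. i \<in> S \<Longrightarrow> \<sigma> i \<in> S" by (simp add: permutes_in_image)
  then show "real_of_int (sign \<sigma>) * (\<Prod>i\<in>S. M i (\<sigma> i)) = real_of_int (sign \<sigma>) * (\<Prod>i\<in>S. N i (\<sigma> i))"
    using assms by auto
qed

lemma sdet_empty[simp]: "sdet {} M = 1"
  unfolding sdet_def by simp

lemma sdet_transport:
  assumes g: "bij_betw g {0..<n} S"
  shows "sdet S M = det (mat n n (\<lambda>(i,j). M (g i) (g j)))"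
proof -
  have inj: "inj_on g {0..<n}" using g bij_betw_def by blast
  have fin: "finite S" using g bij_betw_finite by blast
  let ?h = "inv_into {0..<n} g"
  have h: "bij_betw ?h S {0..<n}" using g by (rule bij_betw_inv_into)
  have "det (mat n n (\<lambda>(i,j). M (g i) (g j))) =
     (\<Sum>p\<in>{p. p permutes {0..<n}}. of_int (sign p) * (\<Prod>i=0..<n. M (g i) (g (p i))))"
    by (subst det_def') auto
  also have "\<dots> = (\<Sum>\<sigma>\<in>{\<sigma>. \<sigma> permutes S}. real_of_int (sign \<sigma>) * (\<Prod>i\<in>S. M i (\<sigma> i)))"
  proof (rule sum.reindex_bij_witness[where i="map_permutation S ?h" and j="map_permutation {0..<n} g"])
    fix p assume p: "p \<in> {p. p permutes {0..<n}}"
    then have p': "p permutes {0..<n}" by simp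
    show "map_permutation S ?h (map_permutation {0..<n} g p) = p"
      by (rule map_permutation_compose_inv[OF g p']) (use inj in auto)
    show "map_permutation {0..<n} g p \<in> {\<sigma>. \<sigma> permutes S}"
      using map_permutation_permutes[OF g p'] by simp
    have sg: "sign (map_permutation {0..<n} g p) = sign p"
      by (rule sign_map_permutation[OF inj p']) simp
    have "(\<Prod>i\<in>S. M i (map_permutation {0..<n} g p i)) =
          (\<Prod>i\<in>g ` {0..<n}. M i (map_permutation {0..<n} g p i))"
      using g by (simp add: bij_betw_def)
    also have "\<dots> = (\<Prod>i=0..<n. M (g i) (map_permutation {0..<n} g p (g i)))"
      by (rule prod.reindex[OF inj, unfolded comp_def])
    also have "\<dots> = (\<Prod>i=0..<n. M (g i) (g (p i)))"
      by (intro prod.cong refl) (simp add: map_permutation_apply[OF inj])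
    finally show "real_of_int (sign (map_permutation {0..<n} g p)) *
        (\<Prod>i\<in>S. M i (map_permutation {0..<n} g p i)) =
        of_int (sign p) * (\<Prod>i = 0..<n. M (g i) (g (p i)))"
      using sg by simp
  next
    fix \<sigma> assume s: "\<sigma> \<in> {\<sigma>. \<sigma> permutes S}"
    then have s': "\<sigma> permutes S" by simp
    show "map_permutation {0..<n} g (map_permutation S ?h \<sigma>) = \<sigma>"
      by (rule map_permutation_compose_inv[OF h s']) (use g in \<open>auto simp: bij_betw_inv_into_right\<close>)
    show "map_permutation S ?h \<sigma> \<in> {p. p permutes {0..<n}}"
      using map_permutation_permutes[OF h s'] by simp
  qed
  finally show ?thesis unfolding sdet_def by simp
qed

lemma sum_transport:
  assumes g: "bij_betw g {0..<n} S"
  shows "(\<Sum>k\<in>S. f k) = (\<Sum>k=0..<n. f (g k))"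
proof -
  have inj: "inj_on g {0..<n}" using g bij_betw_def by blast
  have "(\<Sum>k\<in>S. f k) = (\<Sum>k\<in>g ` {0..<n}. f k)" using g by (simp add: bij_betw_def)
  also have "\<dots> = (\<Sum>k=0..<n. f (g k))" by (rule sum.reindex[OF inj, unfolded comp_def])
  finally show ?thesis .
qed

lemma sdet_mult:
  assumes fin: "finite S"
  shows "sdet S (smat_mult S M N) = sdet S M * sdet S N"
proof -
  obtain g where g: "bij_betw g {0..<card S} S" using ex_bij_betw_nat_finite[OF fin] by blast
  let ?n = "card S"
  have gi: "\<And>i. i < ?n \<Longrightarrow> g i \<in> S" using g bij_betwE by fastforce
  have "mat ?n ?n (\<lambda>(i,j). smat_mult S M N (g i) (g j)) =
        mat ?n ?n (\<lambda>(i,j). M (g i) (g j)) * mat ?n ?n (\<lambda>(i,j). N (g i) (g j))"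
  proof (rule eq_matI)
    fix i j assume i: "i < dim_row (mat ?n ?n (\<lambda>(i,j). M (g i) (g j)) * mat ?n ?n (\<lambda>(i,j). N (g i) (g j)))"
      and j: "j < dim_col (mat ?n ?n (\<lambda>(i,j). M (g i) (g j)) * mat ?n ?n (\<lambda>(i,j). N (g i) (g j)))"
    from i j have i': "i < ?n" and j': "j < ?n" by auto
    show "mat ?n ?n (\<lambda>(i,j). smat_mult S M N (g i) (g j)) $$ (i, j) =
      (mat ?n ?n (\<lambda>(i,j). M (g i) (g j)) * mat ?n ?n (\<lambda>(i,j). N (g i) (g j))) $$ (i, j)"
      using i' j' by (simp add: smat_mult_def scalar_prod_def sum_transport[OF g])
  qed auto
  then show ?thesis
    by (simp add: sdet_transport[OF g] det_mult[of _ ?n])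
qed

lemma sdet_kernel:
  assumes fin: "finite S" and d: "sdet S M \<noteq> 0"
    and v: "\<And>i. i \<in> S \<Longrightarrow> (\<Sum>j\<in>S. M i j * v j) = 0"
    and j: "j \<in> S"
  shows "v j = 0"
proof -
  obtain g where g: "bij_betw g {0..<card S} S" using ex_bij_betw_nat_finite[OF fin] by blast
  let ?n = "card S"
  let ?A = "mat ?n ?n (\<lambda>(i,j). M (g i) (g j))"
  let ?x = "vec ?n (\<lambda>k. v (g k))"
  have gi: "\<And>i. i < ?n \<Longrightarrow> g i \<in> S" using g bij_betwE by fastforce
  have A: "?A \<in> carrier_mat ?n ?n" by simp
  have dA: "det ?A \<noteq> 0" using d sdet_transport[OF g] by simp
  have "?A *\<^sub>v ?x = 0\<^sub>v ?n"
  proof (rule eq_vecI)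
    fix i assume "i < dim_vec (0\<^sub>v ?n :: real vec)"
    then have i: "i < ?n" by simp
    have "(?A *\<^sub>v ?x) $ i = (\<Sum>k=0..<?n. M (g i) (g k) * v (g k))"
      using i by (simp add: scalar_prod_def)
    also have "\<dots> = 0" using v[OF gi[OF i]] sum_transport[OF g, of "\<lambda>k. M (g i) k * v k"] by simp
    finally show "(?A *\<^sub>v ?x) $ i = 0\<^sub>v ?n $ i" using i by simp
  qed simp
  then have "?x = 0\<^sub>v ?n"
    using det_0_iff_vec_prod_zero_field[OF A] dA by (metis vec_carrier)
  moreover obtain k where k: "k < ?n" "g k = j" using g j
    by (metis atLeastLessThan_iff bij_betw_iff_bijections)
  ultimately show ?thesis by (metis index_vec index_zero_vec(1))
qed

lemma sdet_col:
  assumes fin: "finite S" and j: "j \<in> S" and z: "\<And>i. i \<in> S \<Longrightarrow> i \<noteq> j \<Longrightarrow> M i j = 0"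
  shows "sdet S M = M j j * sdet (S - {j}) M"
proof -
  have "sdet S M = (\<Sum>\<sigma>\<in>{\<sigma>. \<sigma> permutes S \<and> \<sigma> j = j}. real_of_int (sign \<sigma>) * (\<Prod>i\<in>S. M i (\<sigma> i)))"
    unfolding sdet_def
  proof (rule sum.mono_neutral_right)
    show "finite {\<sigma>. \<sigma> permutes S}" using finite_permutations[OF fin] .
    show "{\<sigma>. \<sigma> permutes S \<and> \<sigma> j = j} \<subseteq> {\<sigma>. \<sigma> permutes S}" by auto
    show "\<forall>\<sigma>\<in>{\<sigma>. \<sigma> permutes S} - {\<sigma>. \<sigma> permutes S \<and> \<sigma> j = j}.
            real_of_int (sign \<sigma>) * (\<Prod>i\<in>S. M i (\<sigma> i)) = 0"
    proof
      fix \<sigma> assume "\<sigma> \<in> {\<sigma>. \<sigma> permutes S} - {\<sigma>. \<sigma> permutes S \<and> \<sigma> j = j}"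
      then have p: "\<sigma> permutes S" and ne: "\<sigma> j \<noteq> j" by auto
      let ?i = "Hilbert_Choice.inv \<sigma> j"
      have si: "\<sigma> ?i = j" using permutes_inverses(1)[OF p] by simp
      have iS: "?i \<in> S" using p j by (metis permutes_in_image si)
      have "?i \<noteq> j" using si ne by auto
      then have "M ?i (\<sigma> ?i) = 0" using z[OF iS] si by simp
      then have "(\<Prod>i\<in>S. M i (\<sigma> i)) = 0" using iS fin by (metis (no_types, lifting) prod_zero_iff)
      then show "real_of_int (sign \<sigma>) * (\<Prod>i\<in>S. M i (\<sigma> i)) = 0" by simp
    qed
  qed
  also have "{\<sigma>. \<sigma> permutes S \<and> \<sigma> j = j} = {\<sigma>. \<sigma> permutes (S - {j})}"
  proof (rule Set.set_eqI, rule iffI)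
    fix \<sigma> assume "\<sigma> \<in> {\<sigma>. \<sigma> permutes S \<and> \<sigma> j = j}"
    then show "\<sigma> \<in> {\<sigma>. \<sigma> permutes (S - {j})}" by (auto intro: permutes_superset)
  next
    fix \<sigma> assume "\<sigma> \<in> {\<sigma>. \<sigma> permutes (S - {j})}"
    then show "\<sigma> \<in> {\<sigma>. \<sigma> permutes S \<and> \<sigma> j = j}"
      by (auto intro: permutes_subset permutes_not_in)
  qed
  also have "(\<Sum>\<sigma>\<in>{\<sigma>. \<sigma> permutes (S - {j})}. real_of_int (sign \<sigma>) * (\<Prod>i\<in>S. M i (\<sigma> i)))
     = (\<Sum>\<sigma>\<in>{\<sigma>. \<sigma> permutes (S - {j})}. M j j * (real_of_int (sign \<sigma>) * (\<Prod>i\<in>S-{j}. M i (\<sigma> i))))"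
  proof (rule sum.cong[OF refl])
    fix \<sigma> assume "\<sigma> \<in> {\<sigma>. \<sigma> permutes (S - {j})}"
    then have "\<sigma> j = j" by (auto intro: permutes_not_in)
    then show "real_of_int (sign \<sigma>) * (\<Prod>i\<in>S. M i (\<sigma> i)) = M j j * (real_of_int (sign \<sigma>) * (\<Prod>i\<in>S-{j}. M i (\<sigma> i)))"
      using prod.remove[OF fin j, of "\<lambda>i. M i (\<sigma> i)"] by simp
  qed
  finally show ?thesis unfolding sdet_def by (simp add: sum_distrib_left)
qed

lemma sdet_expand:
  assumes fin: "finite S" and finK: "finite K"
  shows "sdet S (\<lambda>i j. \<Sum>k\<in>K. a i k * b i k j) =
    (\<Sum>\<phi>\<in>PiE S (\<lambda>_. K). (\<Prod>i\<in>S. a i (\<phi> i)) * sdet S (\<lambda>i j. b i (\<phi> i) j))"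
proof -
  have "sdet S (\<lambda>i j. \<Sum>k\<in>K. a i k * b i k j) =
     (\<Sum>\<sigma>\<in>{\<sigma>. \<sigma> permutes S}. \<Sum>\<phi>\<in>PiE S (\<lambda>_. K). real_of_int (sign \<sigma>) *
        ((\<Prod>i\<in>S. a i (\<phi> i)) * (\<Prod>i\<in>S. b i (\<phi> i) (\<sigma> i))))"
    unfolding sdet_def
    by (simp add: prod_sum_PiE[OF fin finK] prod.distrib sum_distrib_left)
  also have "\<dots> = (\<Sum>\<phi>\<in>PiE S (\<lambda>_. K). \<Sum>\<sigma>\<in>{\<sigma>. \<sigma> permutes S}. real_of_int (sign \<sigma>) *
        ((\<Prod>i\<in>S. a i (\<phi> i)) * (\<Prod>i\<in>S. b i (\<phi> i) (\<sigma> i))))"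
    by (rule sum.swap)
  also have "\<dots> = (\<Sum>\<phi>\<in>PiE S (\<lambda>_. K). (\<Prod>i\<in>S. a i (\<phi> i)) * sdet S (\<lambda>i j. b i (\<phi> i) j))"
    unfolding sdet_def by (simp add: sum_distrib_left algebra_simps)
  finally show ?thesis .
qed

lemma sdet_I_plus:
  assumes fin: "finite S"
  shows "sdet S (\<lambda>i j. (if i = j then 1 else 0) + t * C i j) =
    (\<Sum>K\<in>Pow S. t ^ card K * sdet K C)"
proof -
  have step1: "\<And>\<sigma>. (\<Prod>i\<in>S. (if i = \<sigma> i then 1 else 0) + t * C i (\<sigma> i)) =
      (\<Sum>K\<in>Pow S. (t ^ card K * (\<Prod>i\<in>K. C i (\<sigma> i))) * (if \<forall>i\<in>S-K. \<sigma> i = i then 1 else 0))"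
  proof -
    fix \<sigma>
    have "(\<Prod>i\<in>S. (if i = \<sigma> i then 1 else 0) + t * C i (\<sigma> i)) =
          (\<Prod>i\<in>S. t * C i (\<sigma> i) + (if i = \<sigma> i then 1 else 0))" by (simp add: add.commute)
    also have "\<dots> = (\<Sum>K\<in>Pow S. (\<Prod>i\<in>K. t * C i (\<sigma> i)) * (\<Prod>i\<in>S-K. (if i = \<sigma> i then 1 else 0)))"
      by (rule prod_add[OF fin])
    also have "\<dots> = (\<Sum>K\<in>Pow S. (t ^ card K * (\<Prod>i\<in>K. C i (\<sigma> i))) * (if \<forall>i\<in>S-K. \<sigma> i = i then 1 else 0))"
    proof (rule sum.cong[OF refl])
      fix K assume K: "K \<in> Pow S"
      then have fK: "finite K" using fin finite_subset by auto
      have a: "(\<Prod>i\<in>K. t * C i (\<sigma> i)) = t ^ card K * (\<Prod>i\<in>K. C i (\<sigma> i))"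
        by (simp add: prod.distrib)
      have b: "(\<Prod>i\<in>S-K. (if i = \<sigma> i then 1 else 0::real)) = (if \<forall>i\<in>S-K. \<sigma> i = i then 1 else 0)"
      proof (cases "\<forall>i\<in>S-K. \<sigma> i = i")
        case True then show ?thesis by (auto intro: prod.neutral)
      next
        case False
        then obtain i where "i \<in> S - K" "\<sigma> i \<noteq> i" by auto
        then have "(\<Prod>i\<in>S-K. (if i = \<sigma> i then 1 else 0::real)) = 0"
          using fin by (intro prod_zero[OF _ bexI[of _ i]]) auto
        then show ?thesis using False by simp
      qed
      show "(\<Prod>i\<in>K. t * C i (\<sigma> i)) * (\<Prod>i\<in>S-K. (if i = \<sigma> i then 1 else 0)) =
         (t ^ card K * (\<Prod>i\<in>K. C i (\<sigma> i))) * (if \<forall>i\<in>S-K. \<sigma> i = i then 1 else 0)"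
        using a b by simp
    qed
    finally show "(\<Prod>i\<in>S. (if i = \<sigma> i then 1 else 0) + t * C i (\<sigma> i)) =
      (\<Sum>K\<in>Pow S. (t ^ card K * (\<Prod>i\<in>K. C i (\<sigma> i))) * (if \<forall>i\<in>S-K. \<sigma> i = i then 1 else 0))" .
  qed
  have "sdet S (\<lambda>i j. (if i = j then 1 else 0) + t * C i j) =
     (\<Sum>\<sigma>\<in>{\<sigma>. \<sigma> permutes S}. \<Sum>K\<in>Pow S. real_of_int (sign \<sigma>) *
        ((t ^ card K * (\<Prod>i\<in>K. C i (\<sigma> i))) * (if \<forall>i\<in>S-K. \<sigma> i = i then 1 else 0)))"
    unfolding sdet_def step1 by (simp add: sum_distrib_left)
  also have "\<dots> = (\<Sum>K\<in>Pow S. \<Sum>\<sigma>\<in>{\<sigma>. \<sigma> permutes S}. real_of_int (sign \<sigma>) *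
        ((t ^ card K * (\<Prod>i\<in>K. C i (\<sigma> i))) * (if \<forall>i\<in>S-K. \<sigma> i = i then 1 else 0)))"
    by (rule sum.swap)
  also have "\<dots> = (\<Sum>K\<in>Pow S. t ^ card K * sdet K C)"
  proof (rule sum.cong[OF refl])
    fix K assume K: "K \<in> Pow S"
    have "(\<Sum>\<sigma>\<in>{\<sigma>. \<sigma> permutes S}. real_of_int (sign \<sigma>) *
        ((t ^ card K * (\<Prod>i\<in>K. C i (\<sigma> i))) * (if \<forall>i\<in>S-K. \<sigma> i = i then 1 else 0))) =
        (\<Sum>\<sigma>\<in>{\<sigma>. \<sigma> permutes K}. real_of_int (sign \<sigma>) *
        ((t ^ card K * (\<Prod>i\<in>K. C i (\<sigma> i))) * (if \<forall>i\<in>S-K. \<sigma> i = i then 1 else 0)))"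
    proof (rule sum.mono_neutral_right)
      show "finite {\<sigma>. \<sigma> permutes S}" using finite_permutations[OF fin] .
      show "{\<sigma>. \<sigma> permutes K} \<subseteq> {\<sigma>. \<sigma> permutes S}" using K by (auto intro: permutes_subset)
      show "\<forall>\<sigma>\<in>{\<sigma>. \<sigma> permutes S} - {\<sigma>. \<sigma> permutes K}. real_of_int (sign \<sigma>) *
        ((t ^ card K * (\<Prod>i\<in>K. C i (\<sigma> i))) * (if \<forall>i\<in>S-K. \<sigma> i = i then 1 else 0)) = 0"
        by (auto intro: permutes_superset)
    qed
    also have "\<dots> = (\<Sum>\<sigma>\<in>{\<sigma>. \<sigma> permutes K}. t ^ card K * (real_of_int (sign \<sigma>) * (\<Prod>i\<in>K. C i (\<sigma> i))))"
      by (intro sum.cong refl) (auto dest: permutes_not_in)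
    finally show "(\<Sum>\<sigma>\<in>{\<sigma>. \<sigma> permutes S}. real_of_int (sign \<sigma>) *
        ((t ^ card K * (\<Prod>i\<in>K. C i (\<sigma> i))) * (if \<forall>i\<in>S-K. \<sigma> i = i then 1 else 0))) =
        t ^ card K * sdet K C"
      unfolding sdet_def by (simp add: sum_distrib_left)
  qed
  finally show ?thesis .
qed

lemma sdet_single: "sdet {i} C = C i i"
proof -
  have "{\<sigma>. \<sigma> permutes {i}} = {id}" by auto
  then show ?thesis unfolding sdet_def by simp
qed

lemma sdet_pair:
  assumes ij: "i \<noteq> j"
  shows "sdet {i, j} C = C i i * C j j - C i j * C j i"
proof -
  have "{\<sigma>. \<sigma> permutes {i, j}} = {id, Transposition.transpose i j}"
  proof (rule Set.set_eqI, rule iffI)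
    fix \<sigma> assume "\<sigma> \<in> {\<sigma>. \<sigma> permutes {i, j}}"
    then have p: "\<sigma> permutes {i, j}" by simp
    have si: "\<sigma> i \<in> {i, j}" "\<sigma> j \<in> {i, j}" 
      using permutes_in_image[OF p, of i] permutes_in_image[OF p, of j] by auto
    have inj: "\<sigma> i \<noteq> \<sigma> j" using p ij by (metis permutes_inj injD)
    have out: "\<And>x. x \<notin> {i, j} \<Longrightarrow> \<sigma> x = x" using p permutes_not_in by metis
    show "\<sigma> \<in> {id, Transposition.transpose i j}"
    proof (cases "\<sigma> i = i")
      case True
      then have "\<sigma> j = j" using si inj by auto
      then have "\<sigma> = id" using True out by (metis eq_id_iff insert_iff singletonD)
      then show ?thesis by simp
    next
      case False
      then have "\<sigma> i = j" "\<sigma> j = i" using si inj by auto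
      then have "\<sigma> = Transposition.transpose i j" using out
        by (auto simp: fun_eq_iff Transposition.transpose_def)
      then show ?thesis by simp
    qed
  next
    fix \<sigma> assume "\<sigma> \<in> {id, Transposition.transpose i j}"
    then show "\<sigma> \<in> {\<sigma>. \<sigma> permutes {i, j}}" by (auto intro: permutes_swap_id)
  qed
  moreover have "id \<noteq> Transposition.transpose i j" using ij by (metis id_apply transpose_apply_first)
  ultimately show ?thesis unfolding sdet_def using ij by (simp add: sign_swap_id)
qed

lemma sdet_rowsum_zero:
  assumes fin: "finite S" and ne: "S \<noteq> {}" and rs: "\<And>i. i \<in> S \<Longrightarrow> (\<Sum>j\<in>S. M i j) = 0"
  shows "sdet S M = 0"
proof (rule ccontr)
  assume "sdet S M \<noteq> 0"
  moreover obtain j where "j \<in> S" using ne by auto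
  ultimately show False
    using sdet_kernel[OF fin, of M "\<lambda>_. 1" j] rs by simp
qed

definition acyc :: "'a set \<Rightarrow> ('a \<Rightarrow> 'a) \<Rightarrow> bool" where
  "acyc S \<phi> \<longleftrightarrow> (\<exists>h::'a \<Rightarrow> nat. \<forall>i\<in>S. \<phi> i \<in> S \<longrightarrow> h (\<phi> i) < h i)"

lemma acyc_remove_source:
  assumes j: "j \<in> S" and src: "\<And>i. i \<in> S \<Longrightarrow> \<phi> i \<noteq> j"
  shows "acyc S \<phi> \<longleftrightarrow> acyc (S - {j}) \<phi>"
proof
  assume "acyc S \<phi>"
  then obtain h :: "'a \<Rightarrow> nat" where h: "\<forall>i\<in>S. \<phi> i \<in> S \<longrightarrow> h (\<phi> i) < h i" unfolding acyc_def by blast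
  then show "acyc (S - {j}) \<phi>" unfolding acyc_def by (intro exI[of _ h]) auto
next
  assume "acyc (S - {j}) \<phi>"
  then obtain h :: "'a \<Rightarrow> nat" where h: "\<forall>i\<in>S-{j}. \<phi> i \<in> S-{j} \<longrightarrow> h (\<phi> i) < h i" unfolding acyc_def by blast
  define h' where "h' = h(j := Suc (h (\<phi> j)))"
  have "\<forall>i\<in>S. \<phi> i \<in> S \<longrightarrow> h' (\<phi> i) < h' i"
  proof (intro ballI impI)
    fix i assume i: "i \<in> S" "\<phi> i \<in> S"
    have pj: "\<phi> i \<noteq> j" using src[OF i(1)] .
    show "h' (\<phi> i) < h' i"
    proof (cases "i = j")
      case True then show ?thesis using pj by (simp add: h'_def)
    next
      case False then show ?thesis using h i pj by (simp add: h'_def)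
    qed
  qed
  then show "acyc S \<phi>" unfolding acyc_def by blast
qed

lemma not_acyc_closed:
  assumes ne: "S \<noteq> {}" and into: "\<And>i. i \<in> S \<Longrightarrow> \<phi> i \<in> S"
  shows "\<not> acyc S \<phi>"
proof
  assume "acyc S \<phi>"
  then obtain h :: "'a \<Rightarrow> nat" where h: "\<forall>i\<in>S. \<phi> i \<in> S \<longrightarrow> h (\<phi> i) < h i" unfolding acyc_def by blast
  obtain k where k: "k \<in> S" using ne by blast
  obtain m where m: "m \<in> S" "\<forall>y. y \<in> S \<longrightarrow> h m \<le> h y"
    using ex_has_least_nat[of "\<lambda>x. x \<in> S" k h] k by blast
  have "h m \<le> h (\<phi> m)" using m into[OF m(1)] by blast
  moreover have "h (\<phi> m) < h m" using h m(1) into[OF m(1)] by blast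
  ultimately show False by linarith
qed

lemma sdet_parent_aux:
  "\<forall>S. card S = n \<longrightarrow> finite S \<longrightarrow> (\<forall>i\<in>S. \<phi> i \<noteq> i) \<longrightarrow>
     sdet S (\<lambda>i j. (if j = i then 1 else 0) - (if j = \<phi> i then 1 else 0)) = (if acyc S \<phi> then 1 else 0)"
proof (induction n rule: less_induct)
  case (less n)
  show ?case
  proof (intro allI impI)
    fix S :: "'a set" assume cS: "card S = n" and fin: "finite S" and nf: "\<forall>i\<in>S. \<phi> i \<noteq> i"
    let ?M = "(\<lambda>i j. (if j = i then 1 else 0) - (if j = \<phi> i then 1 else (0::real)))"
    show "sdet S ?M = (if acyc S \<phi> then 1 else 0)"
    proof (cases "S = {}")
      case True then show ?thesis by (simp add: acyc_def)
    next
      case ne: False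
      show ?thesis
      proof (cases "\<exists>j\<in>S. \<forall>i\<in>S. \<phi> i \<noteq> j")
        case True
        then obtain j where j: "j \<in> S" and src: "\<And>i. i \<in> S \<Longrightarrow> \<phi> i \<noteq> j" by blast
        have e1: "sdet S ?M = ?M j j * sdet (S - {j}) ?M"
          by (rule sdet_col[OF fin j]) (use src in auto)
        have e2: "?M j j = 1" using nf j by auto
        have e3: "sdet (S - {j}) ?M = (if acyc (S - {j}) \<phi> then 1 else 0)"
        proof -
          have lt: "card (S - {j}) < n" using cS card_Diff1_less[OF fin j] by simp
          have "\<forall>i\<in>S - {j}. \<phi> i \<noteq> i" using nf by blast
          moreover have "finite (S - {j})" using fin by simp
          ultimately show ?thesis using less.IH[rule_format, OF lt refl] by simp
        qed
        show ?thesis using e1 e2 e3 acyc_remove_source[OF j src] by simp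
      next
        case False
        then have sur: "S \<subseteq> \<phi> ` S" by (auto simp: image_iff)
        have "card S \<le> card (\<phi> ` S)" using sur fin by (simp add: card_mono)
        moreover have "card (\<phi> ` S) \<le> card S" using fin card_image_le by blast
        ultimately have "card S = card (\<phi> ` S)" by linarith
        then have "S = \<phi> ` S" using card_subset_eq[of "\<phi> ` S" S] sur fin by blast
        then have "\<phi> ` S = S" by simp
        then have into: "\<And>i. i \<in> S \<Longrightarrow> \<phi> i \<in> S" by blast
        have "sdet S ?M = 0"
        proof (rule sdet_rowsum_zero[OF fin ne])
          fix i assume i: "i \<in> S"
          have "(\<Sum>j\<in>S. ?M i j) = (\<Sum>j\<in>S. (if j = i then 1 else 0)) - (\<Sum>j\<in>S. (if j = \<phi> i then 1 else (0::real)))"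
            by (simp add: sum_subtractf)
          also have "\<dots> = 0" using i into[OF i] fin by simp
          finally show "(\<Sum>j\<in>S. ?M i j) = 0" .
        qed
        moreover have "\<not> acyc S \<phi>" using not_acyc_closed[OF ne into] .
        ultimately show ?thesis by simp
      qed
    qed
  qed
qed

lemma sdet_parent:
  assumes "finite S" "\<And>i. i \<in> S \<Longrightarrow> \<phi> i \<noteq> i"
  shows "sdet S (\<lambda>i j. (if j = i then 1 else 0) - (if j = \<phi> i then 1 else 0)) = (if acyc S \<phi> then 1 else 0)"
proof -
  have "\<forall>i\<in>S. \<phi> i \<noteq> i" using assms(2) by blast
  then show ?thesis using sdet_parent_aux[of "card S" \<phi>, rule_format, OF refl assms(1)] by simp
qed

definition pfun :: "'a set \<Rightarrow> 'a set set \<Rightarrow> 'a \<Rightarrow> ('a \<Rightarrow> 'a) set" where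
  "pfun V E r = {\<phi> \<in> PiE (V - {r}) (\<lambda>_. V). (\<forall>i\<in>V-{r}. {i, \<phi> i} \<in> E) \<and> acyc (V - {r}) \<phi>}"

definition tree_of :: "'a set \<Rightarrow> 'a \<Rightarrow> ('a \<Rightarrow> 'a) \<Rightarrow> 'a set set" where
  "tree_of V r \<phi> = (\<lambda>i. {i, \<phi> i}) ` (V - {r})"

lemma adj_sym: "adj F x y \<longleftrightarrow> adj F y x"
  unfolding adj_def by (simp add: insert_commute)

lemma adj_rtrancl_sym:
  assumes "(adj F)\<^sup>*\<^sup>* x y" shows "(adj F)\<^sup>*\<^sup>* y x"
  using assms
proof (induction rule: rtranclp_induct)
  case base then show ?case by simp
next
  case (step y z)
  have "adj F z y" using step(2) adj_sym by metis
  then show ?case using step(3) by (rule converse_rtranclp_into_rtranclp)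
qed

lemma adj_mono: "F \<subseteq> G \<Longrightarrow> (adj F)\<^sup>*\<^sup>* x y \<Longrightarrow> (adj G)\<^sup>*\<^sup>* x y"
proof -
  assume FG: "F \<subseteq> G" and r: "(adj F)\<^sup>*\<^sup>* x y"
  have "adj F \<le> adj G" using FG unfolding adj_def by auto
  then have "(adj F)\<^sup>*\<^sup>* \<le> (adj G)\<^sup>*\<^sup>*" by (rule rtranclp_mono)
  then show ?thesis using r by (simp add: le_fun_def)
qed

lemma simple_graph_edge:
  assumes "simple_graph V E" "e \<in> E"
  obtains x y where "x \<in> V" "y \<in> V" "x \<noteq> y" "e = {x, y}"
  using assms unfolding simple_graph_def by blast

lemma simple_graph_edge_mem:
  assumes "simple_graph V E" "{a, b} \<in> E"
  shows "a \<in> V" "b \<in> V" "a \<noteq> b"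
proof -
  obtain x y where "x \<in> V" "y \<in> V" "x \<noteq> y" "{a, b} = {x, y}"
    using simple_graph_edge[OF assms] by blast
  then show "a \<in> V" "b \<in> V" "a \<noteq> b" by (auto simp: doubleton_eq_iff)
qed

lemma pfunD:
  assumes "\<phi> \<in> pfun V E r"
  shows "\<And>i. i \<in> V - {r} \<Longrightarrow> \<phi> i \<in> V"
    and "\<And>i. i \<in> V - {r} \<Longrightarrow> {i, \<phi> i} \<in> E"
    and "acyc (V - {r}) \<phi>"
    and "\<phi> \<in> PiE (V - {r}) (\<lambda>_. V)"
  using assms unfolding pfun_def by auto

lemma pfun_reach_root:
  assumes p: "\<phi> \<in> pfun V E r" and iV: "i \<in> V"
  shows "(adj (tree_of V r \<phi>))\<^sup>*\<^sup>* i r"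
proof -
  obtain h :: "'a \<Rightarrow> nat" where h: "\<forall>i\<in>V-{r}. \<phi> i \<in> V-{r} \<longrightarrow> h (\<phi> i) < h i"
    using pfunD(3)[OF p] unfolding acyc_def by blast
  have "\<forall>i. h i = k \<longrightarrow> i \<in> V \<longrightarrow> (adj (tree_of V r \<phi>))\<^sup>*\<^sup>* i r" for k
  proof (induction k rule: less_induct)
    case (less k)
    show ?case
    proof (intro allI impI)
      fix i assume hk: "h i = k" and iV: "i \<in> V"
      show "(adj (tree_of V r \<phi>))\<^sup>*\<^sup>* i r"
      proof (cases "i = r")
        case True then show ?thesis by simp
      next
        case False
        then have iS: "i \<in> V - {r}" using iV by simp
        have a: "adj (tree_of V r \<phi>) i (\<phi> i)" unfolding adj_def tree_of_def using iS by blast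
        have pV: "\<phi> i \<in> V" using pfunD(1)[OF p iS] .
        show ?thesis
        proof (cases "\<phi> i = r")
          case True then show ?thesis using a by simp
        next
          case False
          then have "\<phi> i \<in> V - {r}" using pV by simp
          then have "h (\<phi> i) < k" using h iS hk by blast
          then have "(adj (tree_of V r \<phi>))\<^sup>*\<^sup>* (\<phi> i) r" using less.IH pV by blast
          then show ?thesis using a by (metis converse_rtranclp_into_rtranclp)
        qed
      qed
    qed
  qed
  then show ?thesis using iV by blast
qed

lemma pfun_connected:
  assumes p: "\<phi> \<in> pfun V E r"
  shows "connected_on V (tree_of V r \<phi>)"
  unfolding connected_on_def
proof (intro ballI)
  fix x y assume x: "x \<in> V" and y: "y \<in> V"
  have "(adj (tree_of V r \<phi>))\<^sup>*\<^sup>* x r" using pfun_reach_root[OF p x] .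
  moreover have "(adj (tree_of V r \<phi>))\<^sup>*\<^sup>* r y" using adj_rtrancl_sym[OF pfun_reach_root[OF p y]] .
  ultimately show "(adj (tree_of V r \<phi>))\<^sup>*\<^sup>* x y" by (rule rtranclp_trans)
qed

lemma acyc_tranclp:
  assumes h: "\<forall>i\<in>S. \<phi> i \<in> S \<longrightarrow> h (\<phi> i) < (h i :: nat)"
  shows "(\<lambda>a b. a \<in> S \<and> \<phi> a = b)\<^sup>+\<^sup>+ x y \<Longrightarrow> y \<in> S \<Longrightarrow> h y < h x"
proof (induction rule: tranclp_induct)
  case (base y) then show ?case using h by blast
next
  case (step y z)
  then have "y \<in> S" "h z < h y" using h by blast+
  then show ?case using step by fastforce
qed

lemma pfun_acyclic:
  assumes p: "\<phi> \<in> pfun V E r"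
  shows "acyclic_edges (tree_of V r \<phi>)"
proof -
  let ?S = "V - {r}"
  let ?T = "tree_of V r \<phi>"
  let ?R = "\<lambda>a b. a \<in> ?S \<and> \<phi> a = b"
  obtain h :: "'a \<Rightarrow> nat" where h: "\<forall>i\<in>?S. \<phi> i \<in> ?S \<longrightarrow> h (\<phi> i) < h i"
    using pfunD(3)[OF p] unfolding acyc_def by blast
  have key: "\<not> (adj (?T - {{a, \<phi> a}}))\<^sup>*\<^sup>* a (\<phi> a)" if aS: "a \<in> ?S" for a
  proof
    assume conn: "(adj (?T - {{a, \<phi> a}}))\<^sup>*\<^sup>* a (\<phi> a)"
    define D where "D = {b. ?R\<^sup>*\<^sup>* b a}"
    have clos: "q \<in> D" if pq: "adj (?T - {{a, \<phi> a}}) p q" and pD: "p \<in> D" for p q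
    proof -
      have pqT: "{p, q} \<in> ?T" and ne: "{p, q} \<noteq> {a, \<phi> a}" using pq unfolding adj_def by auto
      obtain c where cS: "c \<in> ?S" and pqc: "{p, q} = {c, \<phi> c}" using pqT unfolding tree_of_def by blast
      show "q \<in> D"
      proof (cases "p = c \<and> q = \<phi> c")
        case True
        have Rca: "?R\<^sup>*\<^sup>* c a" using pD True D_def by simp
        have "c \<noteq> a" using ne True by auto
        from Rca have "?R\<^sup>*\<^sup>* (\<phi> c) a"
          by (rule converse_rtranclpE) (use \<open>c \<noteq> a\<close> in auto)
        then show ?thesis using True D_def by simp
      next
        case False
        then have pc: "p = \<phi> c" and qc: "q = c" using pqc by (auto simp: doubleton_eq_iff)
        have r2: "?R\<^sup>*\<^sup>* (\<phi> c) a" using pD pc D_def by simp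
        have "?R c (\<phi> c)" using cS by simp
        then have "?R\<^sup>*\<^sup>* c a" using r2 by (rule converse_rtranclp_into_rtranclp)
        then show ?thesis using qc D_def by simp
      qed
    qed
    have "z \<in> D" if "(adj (?T - {{a, \<phi> a}}))\<^sup>*\<^sup>* a z" for z
      using that
    proof (induction rule: rtranclp_induct)
      case base then show ?case by (simp add: D_def)
    next
      case (step y z) then show ?case using clos by blast
    qed
    then have "\<phi> a \<in> D" using conn by blast
    then have r1: "?R\<^sup>*\<^sup>* (\<phi> a) a" by (simp add: D_def)
    have "?R a (\<phi> a)" using aS by simp
    then have "?R\<^sup>+\<^sup>+ a a" using r1 by (rule rtranclp_into_tranclp2)
    then have "h a < h a" using acyc_tranclp[OF h] aS by blast
    then show False by simp
  qed
  show ?thesis unfolding acyclic_edges_def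
  proof (intro allI impI)
    fix x y assume xy: "{x, y} \<in> ?T"
    obtain a where aS: "a \<in> ?S" and e: "{x, y} = {a, \<phi> a}" using xy unfolding tree_of_def by blast
    show "\<not> (adj (?T - {{x, y}}))\<^sup>*\<^sup>* x y"
    proof (cases "x = a \<and> y = \<phi> a")
      case True then show ?thesis using key[OF aS] by simp
    next
      case False
      then have "x = \<phi> a" "y = a" using e by (auto simp: doubleton_eq_iff)
      then show ?thesis using key[OF aS] e adj_rtrancl_sym by metis
    qed
  qed
qed

lemma pfun_tree:
  assumes p: "\<phi> \<in> pfun V E r"
  shows "tree_of V r \<phi> \<in> spanning_trees V E"
proof -
  have "tree_of V r \<phi> \<subseteq> E" using pfunD(2)[OF p] unfolding tree_of_def by blast
  then show ?thesis unfolding spanning_trees_def using pfun_connected[OF p] pfun_acyclic[OF p] by blast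
qed

lemma pfun_inj_edge:
  assumes p: "\<phi> \<in> pfun V E r"
  shows "inj_on (\<lambda>i. {i, \<phi> i}) (V - {r})"
proof (rule inj_onI)
  fix i j assume i: "i \<in> V - {r}" and j: "j \<in> V - {r}" and eq: "{i, \<phi> i} = {j, \<phi> j}"
  obtain h :: "'a \<Rightarrow> nat" where h: "\<forall>i\<in>V-{r}. \<phi> i \<in> V-{r} \<longrightarrow> h (\<phi> i) < h i"
    using pfunD(3)[OF p] unfolding acyc_def by blast
  show "i = j"
  proof (rule ccontr)
    assume "i \<noteq> j"
    then have "i = \<phi> j" "j = \<phi> i" using eq by (auto simp: doubleton_eq_iff)
    then have 1: "h (\<phi> j) < h j" using h i j by blast
    have 2: "h (\<phi> i) < h i" using h i j \<open>j = \<phi> i\<close> by blast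
    have a1: "h i < h j" using 1 unfolding \<open>i = \<phi> j\<close>[symmetric] .
    have a2: "h j < h i" using 2 unfolding \<open>j = \<phi> i\<close>[symmetric] .
    show False using a1 a2 by linarith
  qed
qed

lemma exists_pfun:
  assumes g: "simple_graph V E" and r: "r \<in> V" and FE: "F \<subseteq> E" and c: "connected_on V F"
  shows "\<exists>\<phi>\<in>pfun V E r. \<forall>i\<in>V-{r}. {i, \<phi> i} \<in> F"
proof -
  define d where "d i = (LEAST n. (adj F ^^ n) i r)" for i
  have dd: "(adj F ^^ d i) i r" if iV: "i \<in> V" for i
  proof -
    have "(adj F)\<^sup>*\<^sup>* i r" using c iV r unfolding connected_on_def by blast
    then obtain n where "(adj F ^^ n) i r" using rtranclp_power by metis
    then show ?thesis unfolding d_def by (rule LeastI)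
  qed
  have step: "\<exists>j. adj F i j \<and> d j < d i" if iS: "i \<in> V - {r}" for i
  proof -
    have p: "(adj F ^^ d i) i r" using dd iS by blast
    have "d i \<noteq> 0"
    proof
      assume "d i = 0"
      then have "i = r" using p by (auto elim: relpowp_0_E)
      then show False using iS by simp
    qed
    then obtain m where m: "d i = Suc m" by (cases "d i") auto
    then have "(adj F ^^ Suc m) i r" using p by simp
    then obtain j where j1: "adj F i j" and j2: "(adj F ^^ m) j r" by (rule relpowp_Suc_E2)
    have "d j \<le> m" unfolding d_def using j2 by (rule Least_le)
    then show ?thesis using j1 m by (intro exI[of _ j]) simp
  qed
  define \<phi> where "\<phi> = (\<lambda>i. if i \<in> V - {r} then (SOME j. adj F i j \<and> d j < d i) else undefined)"
  have \<phi>p: "adj F i (\<phi> i) \<and> d (\<phi> i) < d i" if iS: "i \<in> V - {r}" for i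
    unfolding \<phi>_def using iS someI_ex[OF step[OF iS]] by simp
  have inF: "{i, \<phi> i} \<in> F" if iS: "i \<in> V - {r}" for i using \<phi>p[OF iS] unfolding adj_def by simp
  have inE: "{i, \<phi> i} \<in> E" if iS: "i \<in> V - {r}" for i using inF[OF iS] FE by blast
  have inV: "\<phi> i \<in> V" if iS: "i \<in> V - {r}" for i using simple_graph_edge_mem(2)[OF g inE[OF iS]] .
  have "\<phi> \<in> PiE (V - {r}) (\<lambda>_. V)" unfolding PiE_iff extensional_def using inV by (auto simp: \<phi>_def)
  moreover have "acyc (V - {r}) \<phi>" unfolding acyc_def using \<phi>p by blast
  ultimately have "\<phi> \<in> pfun V E r" unfolding pfun_def using inE by blast
  then show ?thesis using inF by blast
qed

lemma pfun_surj:
  assumes g: "simple_graph V E" and r: "r \<in> V" and T: "T \<in> spanning_trees V E"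
  shows "\<exists>\<phi>\<in>pfun V E r. tree_of V r \<phi> = T"
proof -
  have TE: "T \<subseteq> E" and cT: "connected_on V T" and aT: "acyclic_edges T"
    using T unfolding spanning_trees_def by auto
  obtain \<phi> where p: "\<phi> \<in> pfun V E r" and inT: "\<forall>i\<in>V-{r}. {i, \<phi> i} \<in> T"
    using exists_pfun[OF g r TE cT] by blast
  have sub: "tree_of V r \<phi> \<subseteq> T" using inT unfolding tree_of_def by blast
  have "T \<subseteq> tree_of V r \<phi>"
  proof
    fix e assume eT: "e \<in> T"
    obtain x y where xy: "x \<in> V" "y \<in> V" "x \<noteq> y" "e = {x, y}"
      using simple_graph_edge[OF g] eT TE by blast
    show "e \<in> tree_of V r \<phi>"
    proof (rule ccontr)
      assume "e \<notin> tree_of V r \<phi>"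
      then have "tree_of V r \<phi> \<subseteq> T - {e}" using sub by blast
      moreover have "(adj (tree_of V r \<phi>))\<^sup>*\<^sup>* x y"
        using pfun_connected[OF p] xy unfolding connected_on_def by blast
      ultimately have "(adj (T - {e}))\<^sup>*\<^sup>* x y" by (rule adj_mono)
      then show False using aT eT xy unfolding acyclic_edges_def by blast
    qed
  qed
  then show ?thesis using sub p by blast
qed

lemma pfun_inj:
  assumes p: "\<phi> \<in> pfun V E r" and q: "\<psi> \<in> pfun V E r"
    and eq: "tree_of V r \<phi> = tree_of V r \<psi>"
  shows "\<phi> = \<psi>"
proof -
  let ?S = "V - {r}"
  obtain h :: "'a \<Rightarrow> nat" where h: "\<forall>i\<in>?S. \<psi> i \<in> ?S \<longrightarrow> h (\<psi> i) < h i"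
    using pfunD(3)[OF q] unfolding acyc_def by blast
  have main: "\<forall>i. h i = k \<longrightarrow> i \<in> ?S \<longrightarrow> \<phi> i = \<psi> i" for k
  proof (induction k rule: less_induct)
    case (less k)
    show ?case
    proof (intro allI impI)
      fix i assume hk: "h i = k" and iS: "i \<in> ?S"
      show "\<phi> i = \<psi> i"
      proof (rule ccontr)
        assume ne: "\<phi> i \<noteq> \<psi> i"
        have "{i, \<psi> i} \<in> tree_of V r \<phi>" using eq iS unfolding tree_of_def by blast
        then obtain c where cS: "c \<in> ?S" and ce: "{i, \<psi> i} = {c, \<phi> c}" unfolding tree_of_def by blast
        have "c \<noteq> i"
        proof
          assume "c = i"
          then have "\<psi> i = \<phi> i" using ce by (auto simp: doubleton_eq_iff)
          then show False using ne by simp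
        qed
        then have cj: "c = \<psi> i" and pc: "\<phi> c = i" using ce by (auto simp: doubleton_eq_iff)
        have jS: "\<psi> i \<in> ?S" using cS cj by simp
        have hj: "h (\<psi> i) < k" using h iS jS hk by blast
        have "\<psi> (\<psi> i) \<noteq> i"
        proof
          assume a: "\<psi> (\<psi> i) = i"
          have "\<psi> (\<psi> i) \<in> ?S" using a iS by simp
          then have "h (\<psi> (\<psi> i)) < h (\<psi> i)" using h jS by blast
          then have "h i < h (\<psi> i)" unfolding a .
          then show False using hj hk by simp
        qed
        then have "\<phi> (\<psi> i) \<noteq> \<psi> (\<psi> i)" using pc cj by simp
        moreover have "\<phi> (\<psi> i) = \<psi> (\<psi> i)" using less.IH[OF hj] jS by blast
        ultimately show False by simp
      qed
    qed
  qed
  have "\<phi> \<in> extensional ?S" "\<psi> \<in> extensional ?S" using pfunD(4)[OF p] pfunD(4)[OF q] by (auto simp: PiE_def)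
  then show ?thesis using main by (intro extensionalityI[of _ ?S]) auto
qed

lemma tree_bij:
  assumes g: "simple_graph V E" and r: "r \<in> V"
  shows "bij_betw (tree_of V r) (pfun V E r) (spanning_trees V E)"
  unfolding bij_betw_def
proof
  show "inj_on (tree_of V r) (pfun V E r)" by (rule inj_onI) (rule pfun_inj; assumption)
  show "tree_of V r ` pfun V E r = spanning_trees V E"
  proof
    show "tree_of V r ` pfun V E r \<subseteq> spanning_trees V E"
    proof
      fix T assume "T \<in> tree_of V r ` pfun V E r"
      then obtain \<phi> where "\<phi> \<in> pfun V E r" "T = tree_of V r \<phi>" by blast
      then show "T \<in> spanning_trees V E" using pfun_tree by simp
    qed
    show "spanning_trees V E \<subseteq> tree_of V r ` pfun V E r"
    proof
      fix T assume "T \<in> spanning_trees V E"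
      then obtain \<phi> where "\<phi> \<in> pfun V E r" "tree_of V r \<phi> = T" using pfun_surj[OF g r] by blast
      then show "T \<in> tree_of V r ` pfun V E r" by blast
    qed
  qed
qed

lemma simple_graph_finite: "simple_graph V E \<Longrightarrow> finite V"
  unfolding simple_graph_def by blast

lemma laplacian_row:
  assumes fin: "finite V" and jV: "j \<in> V"
  shows "laplacian V E x i j =
    (\<Sum>k\<in>V. (if {i, k} \<in> E then x {i, k} else 0) * ((if j = i then 1 else 0) - (if j = k then 1 else 0)))"
proof -
  let ?A = "\<lambda>k. (if {i, k} \<in> E then x {i, k} else 0)"
  have "(\<Sum>k\<in>V. ?A k * ((if j = i then 1 else 0) - (if j = k then 1 else 0))) =
        (\<Sum>k\<in>V. ?A k * (if j = i then 1 else 0)) - (\<Sum>k\<in>V. ?A k * (if j = k then 1 else 0))"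
    by (simp add: right_diff_distrib sum_subtractf)
  also have "(\<Sum>k\<in>V. ?A k * (if j = i then 1 else 0)) = (if i = j then (\<Sum>k\<in>V. ?A k) else 0)"
    by (auto simp: sum_distrib_right[symmetric])
  also have "(\<Sum>k\<in>V. ?A k * (if j = k then 1 else 0)) = ?A j"
  proof -
    have "\<And>k. ?A k * (if j = k then 1 else 0) = (if j = k then ?A k else 0)" by simp
    then have "(\<Sum>k\<in>V. ?A k * (if j = k then 1 else 0)) = (\<Sum>k\<in>V. (if j = k then ?A k else 0))"
      by (intro sum.cong) auto
    also have "\<dots> = ?A j" using fin jV by (simp add: sum.delta')
    finally show ?thesis .
  qed
  finally show ?thesis unfolding laplacian_def Let_def by simp
qed

theorem matrix_tree:
  assumes g: "simple_graph V E" and r: "r \<in> V"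
  shows "sdet (V - {r}) (laplacian V E x) = (\<Sum>T\<in>spanning_trees V E. \<Prod>e\<in>T. x e)"
proof -
  let ?S = "V - {r}"
  have fin: "finite V" using simple_graph_finite[OF g] .
  have finS: "finite ?S" using fin by simp
  let ?A = "\<lambda>i k. (if {i, k} \<in> E then x {i, k} else 0)"
  let ?b = "\<lambda>i k j. (if j = i then 1 else 0) - (if j = k then 1 else (0::real))"
  have "sdet ?S (laplacian V E x) = sdet ?S (\<lambda>i j. \<Sum>k\<in>V. ?A i k * ?b i k j)"
    by (rule sdet_cong) (use laplacian_row[OF fin] in auto)
  also have "\<dots> = (\<Sum>\<phi>\<in>PiE ?S (\<lambda>_. V). (\<Prod>i\<in>?S. ?A i (\<phi> i)) * sdet ?S (\<lambda>i j. ?b i (\<phi> i) j))"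
    by (rule sdet_expand[OF finS fin])
  also have "\<dots> = (\<Sum>\<phi>\<in>PiE ?S (\<lambda>_. V). (if \<phi> \<in> pfun V E r then (\<Prod>i\<in>?S. x {i, \<phi> i}) else 0))"
  proof (rule sum.cong[OF refl])
    fix \<phi> assume pe: "\<phi> \<in> PiE ?S (\<lambda>_. V)"
    show "(\<Prod>i\<in>?S. ?A i (\<phi> i)) * sdet ?S (\<lambda>i j. ?b i (\<phi> i) j) =
          (if \<phi> \<in> pfun V E r then (\<Prod>i\<in>?S. x {i, \<phi> i}) else 0)"
    proof (cases "\<forall>i\<in>?S. {i, \<phi> i} \<in> E")
      case True
      have ne: "\<phi> i \<noteq> i" if iS: "i \<in> ?S" for i
      proof -
        have "{i, \<phi> i} \<in> E" using True iS by blast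
        then show ?thesis using simple_graph_edge_mem(3)[OF g, of i "\<phi> i"] by auto
      qed
      have d: "sdet ?S (\<lambda>i j. ?b i (\<phi> i) j) = (if acyc ?S \<phi> then 1 else 0)"
        by (rule sdet_parent[OF finS ne])
      have pr: "(\<Prod>i\<in>?S. ?A i (\<phi> i)) = (\<Prod>i\<in>?S. x {i, \<phi> i})"
        by (rule prod.cong) (use True in auto)
      have "\<phi> \<in> pfun V E r \<longleftrightarrow> acyc ?S \<phi>" using pe True by (simp add: pfun_def)
      then show ?thesis using d pr by simp
    next
      case False
      then obtain i where i: "i \<in> ?S" "{i, \<phi> i} \<notin> E" by blast
      have "(\<Prod>i\<in>?S. ?A i (\<phi> i)) = 0" using finS i by (intro prod_zero[OF _ bexI[of _ i]]) auto
      moreover have "\<phi> \<notin> pfun V E r" using i by (auto simp: pfun_def)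
      ultimately show ?thesis by simp
    qed
  qed
  also have "\<dots> = (\<Sum>\<phi>\<in>pfun V E r. \<Prod>i\<in>?S. x {i, \<phi> i})"
  proof -
    have sub: "pfun V E r \<subseteq> PiE ?S (\<lambda>_. V)" unfolding pfun_def by blast
    have "finite (PiE ?S (\<lambda>_. V))" using finS fin by (intro finite_PiE) auto
    then show ?thesis using sub by (simp add: sum.If_cases Int_absorb1)
  qed
  also have "\<dots> = (\<Sum>\<phi>\<in>pfun V E r. \<Prod>e\<in>tree_of V r \<phi>. x e)"
  proof (rule sum.cong[OF refl])
    fix \<phi> assume p: "\<phi> \<in> pfun V E r"
    show "(\<Prod>i\<in>?S. x {i, \<phi> i}) = (\<Prod>e\<in>tree_of V r \<phi>. x e)"
      unfolding tree_of_def by (rule prod.reindex[OF pfun_inj_edge[OF p], unfolded comp_def, symmetric])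
  qed
  also have "\<dots> = (\<Sum>T\<in>spanning_trees V E. \<Prod>e\<in>T. x e)"
    by (rule sum.reindex_bij_betw[OF tree_bij[OF g r]])
  finally show ?thesis .
qed

lemma pow_poly:
  fixes g :: "'a set \<Rightarrow> real"
  assumes fin: "finite A" and n: "card A \<le> n"
  shows "(\<Sum>K\<in>Pow A. t ^ card K * g K) = (\<Sum>k\<le>n. (\<Sum>K\<in>{K\<in>Pow A. card K = k}. g K) * t ^ k)"
proof -
  have fP: "finite (Pow A)" using fin by simp
  have "(\<Sum>k\<le>n. (\<Sum>K\<in>{K\<in>Pow A. card K = k}. g K) * t ^ k) =
        (\<Sum>k\<le>n. \<Sum>K\<in>Pow A. (if card K = k then g K * t ^ k else 0))"
  proof (intro sum.cong refl)
    fix k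
    have "(\<Sum>K\<in>{K\<in>Pow A. card K = k}. g K) = (\<Sum>K\<in>Pow A. if card K = k then g K else 0)"
      by (simp only: sum.inter_filter[OF fP])
    then show "(\<Sum>K\<in>{K\<in>Pow A. card K = k}. g K) * t ^ k = (\<Sum>K\<in>Pow A. (if card K = k then g K * t ^ k else 0))"
      by (auto simp: sum_distrib_right intro!: sum.cong)
  qed
  also have "\<dots> = (\<Sum>K\<in>Pow A. \<Sum>k\<le>n. (if card K = k then g K * t ^ k else 0))"
    by (rule sum.swap)
  also have "\<dots> = (\<Sum>K\<in>Pow A. t ^ card K * g K)"
  proof (intro sum.cong refl)
    fix K assume "K \<in> Pow A"
    then have "card K \<le> n" using n fin by (meson PowD card_mono order_trans)
    then show "(\<Sum>k\<le>n. (if card K = k then g K * t ^ k else 0)) = t ^ card K * g K"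
      by (simp add: sum.delta)
  qed
  finally show ?thesis by simp
qed

lemma card1_sum:
  assumes fin: "finite A"
  shows "(\<Sum>K\<in>{K\<in>Pow A. card K = 1}. g K) = (\<Sum>a\<in>A. g {a})"
proof -
  have "{K\<in>Pow A. card K = 1} = (\<lambda>a. {a}) ` A"
    by (auto simp: card_1_singleton_iff)
  moreover have "inj_on (\<lambda>a. {a}) A" by (rule inj_onI) simp
  ultimately show ?thesis by (simp add: sum.reindex)
qed

lemma card2_sum:
  fixes g :: "'a set \<Rightarrow> real"
  assumes fin: "finite A"
  shows "2 * (\<Sum>K\<in>{K\<in>Pow A. card K = 2}. g K) = (\<Sum>a\<in>A. \<Sum>b\<in>A-{a}. g {a, b})"
proof -
  let ?D = "Sigma A (\<lambda>a. A - {a})"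
  let ?T = "{K\<in>Pow A. card K = 2}"
  let ?f = "\<lambda>p. {fst p, snd p}"
  let ?h = "\<lambda>p. g {fst p, snd p}"
  have fD: "finite ?D" using fin by auto
  have fT: "finite ?T" using fin by simp
  have img: "?f ` ?D \<subseteq> ?T" by (auto simp: card_2_iff) blast
  have "(\<Sum>K\<in>?T. sum ?h {p\<in>?D. ?f p = K}) = sum ?h ?D"
    by (rule sum.group[OF fD fT img])
  also have "sum ?h ?D = (\<Sum>a\<in>A. \<Sum>b\<in>A-{a}. g {a, b})"
  proof -
    have "(\<Sum>a\<in>A. \<Sum>b\<in>A-{a}. g {a, b}) = (\<Sum>(a,b)\<in>?D. g {a, b})"
      by (rule sum.Sigma) (use fin in auto)
    also have "\<dots> = sum ?h ?D" by (simp add: case_prod_beta')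
    finally show ?thesis by simp
  qed
  also have "(\<Sum>K\<in>?T. sum ?h {p\<in>?D. ?f p = K}) = (\<Sum>K\<in>?T. 2 * g K)"
  proof (intro sum.cong refl)
    fix K assume K: "K \<in> ?T"
    then obtain a b where ab: "K = {a, b}" "a \<noteq> b" by (auto simp: card_2_iff)
    have abA: "a \<in> A" "b \<in> A" using K ab by auto
    have "{p\<in>?D. ?f p = K} = {(a, b), (b, a)}"
      using ab abA by (auto simp: doubleton_eq_iff)
    then have "sum ?h {p\<in>?D. ?f p = K} = ?h (a, b) + ?h (b, a)" using ab by simp
    also have "\<dots> = 2 * g K" using ab by (simp add: insert_commute)
    finally show "sum ?h {p\<in>?D. ?f p = K} = 2 * g K" .
  qed
  finally show ?thesis by (simp add: sum_distrib_left)
qed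

lemma laplacian_lin:
  "laplacian V E (\<lambda>e. a e + t * b e) i j = laplacian V E a i j + t * laplacian V E b i j"
proof -
  have h: "\<And>k. (if {i, k} \<in> E then a {i, k} + t * b {i, k} else 0) =
      (if {i, k} \<in> E then a {i, k} else 0) + t * (if {i, k} \<in> E then b {i, k} else 0)" by simp
  show ?thesis unfolding laplacian_def Let_def h
    by (simp add: sum.distrib sum_distrib_left algebra_simps)
qed

lemma simple_graph_finite_E: "simple_graph V E \<Longrightarrow> finite E"
proof -
  assume g: "simple_graph V E"
  have "E \<subseteq> Pow V"
  proof
    fix e assume "e \<in> E"
    then obtain x y where "x \<in> V" "y \<in> V" "e = {x, y}" using simple_graph_edge[OF g] by metis
    then show "e \<in> Pow V" by auto
  qed
  moreover have "finite V" using g unfolding simple_graph_def by blast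
  ultimately show "finite E" using finite_subset by blast
qed

lemma finite_ST: "simple_graph V E \<Longrightarrow> finite (spanning_trees V E)"
proof -
  assume g: "simple_graph V E"
  have "spanning_trees V E \<subseteq> Pow E" unfolding spanning_trees_def by blast
  then show ?thesis using simple_graph_finite_E[OF g] finite_subset by blast
qed

lemma offdiag_sum:
  fixes f :: "'a \<Rightarrow> 'a \<Rightarrow> real"
  assumes "finite A"
  shows "(\<Sum>a\<in>A. \<Sum>b\<in>A-{a}. f a b) = (\<Sum>a\<in>A. \<Sum>b\<in>A. f a b) - (\<Sum>a\<in>A. f a a)"
proof -
  have "(\<Sum>a\<in>A. \<Sum>b\<in>A-{a}. f a b) = (\<Sum>a\<in>A. (\<Sum>b\<in>A. f a b) - f a a)"
    by (intro sum.cong refl) (simp add: sum_diff1 assms)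
  then show ?thesis by (simp add: sum_subtractf)
qed

lemma smat_mult_inv:
  assumes finS: "finite S"
    and inv: "\<forall>i\<in>S. \<forall>j\<in>S. (\<Sum>k\<in>S. A i k * N k j) = (if i = j then 1 else 0)"
    and i: "i \<in> S" and j: "j \<in> S"
  shows "smat_mult S A (\<lambda>i j. (if i = j then 1 else 0) + t * smat_mult S N B i j) i j = A i j + t * B i j"
proof -
  let ?X = "\<lambda>k. \<Sum>l\<in>S. N k l * B l j"
  have "smat_mult S A (\<lambda>i j. (if i = j then 1 else 0) + t * smat_mult S N B i j) i j =
     (\<Sum>k\<in>S. A i k * (if k = j then 1 else 0) + t * (A i k * ?X k))"
    unfolding smat_mult_def by (intro sum.cong refl) (simp add: algebra_simps)
  also have "\<dots> = (\<Sum>k\<in>S. A i k * (if k = j then 1 else 0)) + t * (\<Sum>k\<in>S. A i k * ?X k)"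
    by (simp only: sum.distrib sum_distrib_left)
  also have "(\<Sum>k\<in>S. A i k * (if k = j then 1 else 0)) = A i j"
  proof -
    have "(\<Sum>k\<in>S. A i k * (if k = j then 1 else 0)) = (\<Sum>k\<in>S. if k = j then A i k else 0)"
      by (intro sum.cong) auto
    also have "\<dots> = A i j" using finS j by simp
    finally show ?thesis .
  qed
  also have "(\<Sum>k\<in>S. A i k * (\<Sum>l\<in>S. N k l * B l j)) = (\<Sum>l\<in>S. (\<Sum>k\<in>S. A i k * N k l) * B l j)"
  proof -
    have "(\<Sum>k\<in>S. A i k * (\<Sum>l\<in>S. N k l * B l j)) = (\<Sum>k\<in>S. \<Sum>l\<in>S. A i k * N k l * B l j)"
      by (simp only: sum_distrib_left mult.assoc)
    also have "\<dots> = (\<Sum>l\<in>S. \<Sum>k\<in>S. A i k * N k l * B l j)" by (rule sum.swap)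
    also have "\<dots> = (\<Sum>l\<in>S. (\<Sum>k\<in>S. A i k * N k l) * B l j)"
      by (simp only: sum_distrib_right)
    finally show ?thesis .
  qed
  also have "\<dots> = (\<Sum>l\<in>S. (if i = l then 1 else 0) * B l j)"
    using inv i by (intro sum.cong refl) simp
  also have "\<dots> = B i j"
  proof -
    have "(\<Sum>l\<in>S. (if i = l then 1 else 0) * B l j) = (\<Sum>l\<in>S. if i = l then B l j else 0)"
      by (intro sum.cong) auto
    also have "\<dots> = B i j" using finS i by (simp add: sum.delta')
    finally show ?thesis .
  qed
  finally show ?thesis .
qed

lemma coeffs_eq:
  assumes g: "simple_graph V E" and r: "r \<in> V"
    and inv: "\<forall>i\<in>V-{r}. \<forall>j\<in>V-{r}. (\<Sum>k\<in>V-{r}. laplacian V E w i k * N k j) = (if i = j then 1 else 0)"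
    and C: "C = smat_mult (V-{r}) N (laplacian V E (\<lambda>e. w e * s e))"
    and Z: "Z = (\<Sum>T\<in>spanning_trees V E. tree_weight w T)"
    and n: "n = card (V - {r}) + card E + 2"
  shows "\<forall>k\<le>n. Z * (\<Sum>K\<in>{K\<in>Pow (V-{r}). card K = k}. sdet K C) =
      (\<Sum>T\<in>spanning_trees V E. tree_weight w T * (\<Sum>F\<in>{F\<in>Pow T. card F = k}. \<Prod>e\<in>F. s e))"
proof -
  let ?S = "V - {r}"
  let ?ST = "spanning_trees V E"
  let ?A = "laplacian V E w"
  let ?B = "laplacian V E (\<lambda>e. w e * s e)"
  have finV: "finite V" using simple_graph_finite[OF g] .
  have finS: "finite ?S" using finV by simp
  have finE: "finite E" using simple_graph_finite_E[OF g] .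
  have finST: "finite ?ST" using finite_ST[OF g] .
  have ZA: "sdet ?S ?A = Z" unfolding Z tree_weight_def by (rule matrix_tree[OF g r])
  have cardT: "card T \<le> n" if T: "T \<in> ?ST" for T
  proof -
    have "T \<subseteq> E" using T unfolding spanning_trees_def by blast
    then have "card T \<le> card E" using finE by (rule card_mono[rotated])
    then show ?thesis using n by simp
  qed
  have finT: "finite T" if T: "T \<in> ?ST" for T
  proof -
    have "T \<subseteq> E" using T unfolding spanning_trees_def by blast
    then show ?thesis using finE finite_subset by blast
  qed
  have poly: "(\<Sum>k\<le>n. (Z * (\<Sum>K\<in>{K\<in>Pow ?S. card K = k}. sdet K C)) * t ^ k) =
      (\<Sum>k\<le>n. (\<Sum>T\<in>?ST. tree_weight w T * (\<Sum>F\<in>{F\<in>Pow T. card F = k}. \<Prod>e\<in>F. s e)) * t ^ k)" for t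
  proof -
    have "sdet ?S (laplacian V E (\<lambda>e. w e + t * (w e * s e))) =
        (\<Sum>T\<in>?ST. \<Prod>e\<in>T. w e + t * (w e * s e))"
      by (rule matrix_tree[OF g r])
    moreover have "sdet ?S (laplacian V E (\<lambda>e. w e + t * (w e * s e))) =
        (\<Sum>k\<le>n. (Z * (\<Sum>K\<in>{K\<in>Pow ?S. card K = k}. sdet K C)) * t ^ k)"
    proof -
      have "sdet ?S (laplacian V E (\<lambda>e. w e + t * (w e * s e))) = sdet ?S (\<lambda>i j. ?A i j + t * ?B i j)"
        by (rule sdet_cong) (simp add: laplacian_lin)
      also have "\<dots> = sdet ?S (smat_mult ?S ?A (\<lambda>i j. (if i = j then 1 else 0) + t * C i j))"
        unfolding C by (rule sdet_cong) (simp add: smat_mult_inv[OF finS inv])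
      also have "\<dots> = sdet ?S ?A * sdet ?S (\<lambda>i j. (if i = j then 1 else 0) + t * C i j)"
        by (rule sdet_mult[OF finS])
      also have "\<dots> = Z * (\<Sum>K\<in>Pow ?S. t ^ card K * sdet K C)"
        unfolding ZA by (simp add: sdet_I_plus[OF finS])
      also have "\<dots> = Z * (\<Sum>k\<le>n. (\<Sum>K\<in>{K\<in>Pow ?S. card K = k}. sdet K C) * t ^ k)"
      proof -
        have "card ?S \<le> n" using n by simp
        then show ?thesis by (simp only: pow_poly[OF finS])
      qed
      also have "\<dots> = (\<Sum>k\<le>n. (Z * (\<Sum>K\<in>{K\<in>Pow ?S. card K = k}. sdet K C)) * t ^ k)"
        by (simp add: sum_distrib_left sum_distrib_right mult.assoc)
      finally show ?thesis .
    qed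
    moreover have "(\<Sum>T\<in>?ST. \<Prod>e\<in>T. w e + t * (w e * s e)) =
       (\<Sum>k\<le>n. (\<Sum>T\<in>?ST. tree_weight w T * (\<Sum>F\<in>{F\<in>Pow T. card F = k}. \<Prod>e\<in>F. s e)) * t ^ k)"
    proof -
      have "(\<Sum>T\<in>?ST. \<Prod>e\<in>T. w e + t * (w e * s e)) =
          (\<Sum>T\<in>?ST. \<Sum>k\<le>n. tree_weight w T * (\<Sum>F\<in>{F\<in>Pow T. card F = k}. \<Prod>e\<in>F. s e) * t ^ k)"
      proof (rule sum.cong[OF refl])
        fix T assume T: "T \<in> ?ST"
        have "(\<Prod>e\<in>T. w e + t * (w e * s e)) = (\<Prod>e\<in>T. w e * (t * s e + 1))"
          by (intro prod.cong refl) (simp add: algebra_simps)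
        also have "\<dots> = tree_weight w T * (\<Prod>e\<in>T. t * s e + 1)"
          unfolding tree_weight_def by (rule prod.distrib)
        also have "(\<Prod>e\<in>T. t * s e + 1) = (\<Sum>F\<in>Pow T. (\<Prod>e\<in>F. t * s e) * (\<Prod>e\<in>T-F. 1))"
          by (rule prod_add[OF finT[OF T]])
        also have "\<dots> = (\<Sum>F\<in>Pow T. t ^ card F * (\<Prod>e\<in>F. s e))"
          by (intro sum.cong refl) (simp add: prod.distrib)
        also have "\<dots> = (\<Sum>k\<le>n. (\<Sum>F\<in>{F\<in>Pow T. card F = k}. \<Prod>e\<in>F. s e) * t ^ k)"
          by (rule pow_poly[OF finT[OF T] cardT[OF T]])
        finally show "(\<Prod>e\<in>T. w e + t * (w e * s e)) =
          (\<Sum>k\<le>n. tree_weight w T * (\<Sum>F\<in>{F\<in>Pow T. card F = k}. \<Prod>e\<in>F. s e) * t ^ k)"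
          by (simp add: sum_distrib_left sum_distrib_right mult.assoc)
      qed
      also have "\<dots> = (\<Sum>k\<le>n. \<Sum>T\<in>?ST. tree_weight w T * (\<Sum>F\<in>{F\<in>Pow T. card F = k}. \<Prod>e\<in>F. s e) * t ^ k)"
        by (rule sum.swap)
      also have "\<dots> = (\<Sum>k\<le>n. (\<Sum>T\<in>?ST. tree_weight w T * (\<Sum>F\<in>{F\<in>Pow T. card F = k}. \<Prod>e\<in>F. s e)) * t ^ k)"
        by (simp only: sum_distrib_right)
      finally show ?thesis .
    qed
    ultimately show ?thesis by simp
  qed
  show ?thesis using polyfun_eq_coeffs[THEN iffD1, OF allI[OF poly]] by blast
qed

lemma sq_offdiag:
  fixes f :: "'a \<Rightarrow> real"
  assumes "finite A"
  shows "(\<Sum>a\<in>A. \<Sum>b\<in>A-{a}. f a * f b) = (\<Sum>a\<in>A. f a)^2 - (\<Sum>a\<in>A. (f a)^2)"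
proof -
  have "(\<Sum>a\<in>A. \<Sum>b\<in>A-{a}. f a * f b) = (\<Sum>a\<in>A. \<Sum>b\<in>A. f a * f b) - (\<Sum>a\<in>A. f a * f a)"
    by (rule offdiag_sum[OF assms])
  also have "(\<Sum>a\<in>A. \<Sum>b\<in>A. f a * f b) = (\<Sum>a\<in>A. f a)^2"
    by (simp add: power2_eq_square sum_product)
  finally show ?thesis by (simp add: power2_eq_square)
qed

lemma moments:
  assumes g: "simple_graph V E" and r: "r \<in> V"
    and inv: "\<forall>i\<in>V-{r}. \<forall>j\<in>V-{r}. (\<Sum>k\<in>V-{r}. laplacian V E w i k * N k j) = (if i = j then 1 else 0)"
    and C: "C = smat_mult (V-{r}) N (laplacian V E (\<lambda>e. w e * s e))"
    and Z: "Z = (\<Sum>T\<in>spanning_trees V E. tree_weight w T)"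
  shows "(\<Sum>T\<in>spanning_trees V E. tree_weight w T * (\<Sum>e\<in>T. s e)) = Z * (\<Sum>i\<in>V-{r}. C i i)"
    and "(\<Sum>T\<in>spanning_trees V E. tree_weight w T * ((\<Sum>e\<in>T. s e)^2 - (\<Sum>e\<in>T. (s e)^2)))
         = Z * ((\<Sum>i\<in>V-{r}. C i i)^2 - (\<Sum>i\<in>V-{r}. \<Sum>j\<in>V-{r}. C i j * C j i))"
proof -
  let ?S = "V - {r}"
  let ?ST = "spanning_trees V E"
  define n where "n = card (V - {r}) + card E + 2"
  have co: "\<forall>k\<le>n. Z * (\<Sum>K\<in>{K\<in>Pow ?S. card K = k}. sdet K C) =
      (\<Sum>T\<in>?ST. tree_weight w T * (\<Sum>F\<in>{F\<in>Pow T. card F = k}. \<Prod>e\<in>F. s e))"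
    by (rule coeffs_eq[OF g r inv C Z n_def])
  have finV: "finite V" using simple_graph_finite[OF g] .
  have finS: "finite ?S" using finV by simp
  have finE: "finite E" using simple_graph_finite_E[OF g] .
  have finT: "finite T" if T: "T \<in> ?ST" for T
  proof -
    have "T \<subseteq> E" using T unfolding spanning_trees_def by blast
    then show ?thesis using finE finite_subset by blast
  qed
  have c1: "Z * (\<Sum>K\<in>{K\<in>Pow ?S. card K = 1}. sdet K C) =
      (\<Sum>T\<in>?ST. tree_weight w T * (\<Sum>F\<in>{F\<in>Pow T. card F = 1}. \<Prod>e\<in>F. s e))"
    using co n_def by simp
  have c2: "Z * (\<Sum>K\<in>{K\<in>Pow ?S. card K = 2}. sdet K C) =
      (\<Sum>T\<in>?ST. tree_weight w T * (\<Sum>F\<in>{F\<in>Pow T. card F = 2}. \<Prod>e\<in>F. s e))"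
    using co n_def by simp
  have l1: "(\<Sum>K\<in>{K\<in>Pow ?S. card K = 1}. sdet K C) = (\<Sum>i\<in>?S. C i i)"
    using card1_sum[OF finS, of "\<lambda>K. sdet K C"] by (simp add: sdet_single)
  have r1: "(\<Sum>F\<in>{F\<in>Pow T. card F = 1}. \<Prod>e\<in>F. s e) = (\<Sum>e\<in>T. s e)" if T: "T \<in> ?ST" for T
    using card1_sum[OF finT[OF T], of "\<lambda>F. \<Prod>e\<in>F. s e"] by simp
  show "(\<Sum>T\<in>?ST. tree_weight w T * (\<Sum>e\<in>T. s e)) = Z * (\<Sum>i\<in>?S. C i i)"
    using c1 l1 r1 by simp
  have l2: "2 * (\<Sum>K\<in>{K\<in>Pow ?S. card K = 2}. sdet K C) =
      (\<Sum>i\<in>?S. C i i)^2 - (\<Sum>i\<in>?S. \<Sum>j\<in>?S. C i j * C j i)"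
  proof -
    have "2 * (\<Sum>K\<in>{K\<in>Pow ?S. card K = 2}. sdet K C) = (\<Sum>a\<in>?S. \<Sum>b\<in>?S-{a}. sdet {a, b} C)"
      by (rule card2_sum[OF finS])
    also have "\<dots> = (\<Sum>a\<in>?S. \<Sum>b\<in>?S-{a}. C a a * C b b - C a b * C b a)"
      by (intro sum.cong refl) (metis DiffD2 singletonI sdet_pair)
    also have "\<dots> = (\<Sum>a\<in>?S. \<Sum>b\<in>?S. C a a * C b b - C a b * C b a) - (\<Sum>a\<in>?S. C a a * C a a - C a a * C a a)"
      by (rule offdiag_sum[OF finS])
    also have "\<dots> = (\<Sum>a\<in>?S. \<Sum>b\<in>?S. C a a * C b b) - (\<Sum>a\<in>?S. \<Sum>b\<in>?S. C a b * C b a)"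
      by (simp add: sum_subtractf)
    also have "(\<Sum>a\<in>?S. \<Sum>b\<in>?S. C a a * C b b) = (\<Sum>i\<in>?S. C i i)^2"
      by (simp add: power2_eq_square sum_product)
    finally show ?thesis .
  qed
  have r2: "2 * (\<Sum>F\<in>{F\<in>Pow T. card F = 2}. \<Prod>e\<in>F. s e) = (\<Sum>e\<in>T. s e)^2 - (\<Sum>e\<in>T. (s e)^2)"
    if T: "T \<in> ?ST" for T
  proof -
    have "2 * (\<Sum>F\<in>{F\<in>Pow T. card F = 2}. \<Prod>e\<in>F. s e) = (\<Sum>a\<in>T. \<Sum>b\<in>T-{a}. \<Prod>e\<in>{a, b}. s e)"
      by (rule card2_sum[OF finT[OF T]])
    also have "\<dots> = (\<Sum>a\<in>T. \<Sum>b\<in>T-{a}. s a * s b)"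
    proof (intro sum.cong refl)
      fix a b assume "b \<in> T - {a}"
      then have "a \<noteq> b" by auto
      then show "(\<Prod>e\<in>{a, b}. s e) = s a * s b" by simp
    qed
    also have "\<dots> = (\<Sum>e\<in>T. s e)^2 - (\<Sum>e\<in>T. (s e)^2)"
      by (rule sq_offdiag[OF finT[OF T]])
    finally show ?thesis .
  qed
  have "(\<Sum>T\<in>?ST. tree_weight w T * ((\<Sum>e\<in>T. s e)^2 - (\<Sum>e\<in>T. (s e)^2))) =
      (\<Sum>T\<in>?ST. 2 * (tree_weight w T * (\<Sum>F\<in>{F\<in>Pow T. card F = 2}. \<Prod>e\<in>F. s e)))"
    by (intro sum.cong refl) (simp add: r2[symmetric])
  also have "\<dots> = 2 * (\<Sum>T\<in>?ST. tree_weight w T * (\<Sum>F\<in>{F\<in>Pow T. card F = 2}. \<Prod>e\<in>F. s e))"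
    by (simp add: sum_distrib_left)
  also have "\<dots> = Z * (2 * (\<Sum>K\<in>{K\<in>Pow ?S. card K = 2}. sdet K C))"
    using c2 by simp
  also have "\<dots> = Z * ((\<Sum>i\<in>?S. C i i)^2 - (\<Sum>i\<in>?S. \<Sum>j\<in>?S. C i j * C j i))"
    using l2 by simp
  finally show "(\<Sum>T\<in>?ST. tree_weight w T * ((\<Sum>e\<in>T. s e)^2 - (\<Sum>e\<in>T. (s e)^2)))
         = Z * ((\<Sum>i\<in>?S. C i i)^2 - (\<Sum>i\<in>?S. \<Sum>j\<in>?S. C i j * C j i))" .
qed

lemma smat_right_inv_ex:
  assumes finS: "finite S" and d: "sdet S A \<noteq> 0"
  shows "\<exists>N. (\<forall>i\<in>S. \<forall>j\<in>S. (\<Sum>k\<in>S. A i k * N k j) = (if i = j then 1 else 0))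
            \<and> (\<forall>i j. i \<notin> S \<or> j \<notin> S \<longrightarrow> N i j = 0)"
proof -
  obtain g where g: "bij_betw g {0..<card S} S" using ex_bij_betw_nat_finite[OF finS] by blast
  let ?n = "card S"
  let ?A = "mat ?n ?n (\<lambda>(i,j). A (g i) (g j))"
  let ?h = "inv_into {0..<?n} g"
  have hS: "bij_betw ?h S {0..<?n}" using g by (rule bij_betw_inv_into)
  have gh: "\<And>i. i \<in> S \<Longrightarrow> g (?h i) = i" using g by (simp add: bij_betw_inv_into_right)
  have hg: "\<And>k. k < ?n \<Longrightarrow> ?h (g k) = k" using g by (simp add: bij_betw_inv_into_left)
  have hlt: "\<And>i. i \<in> S \<Longrightarrow> ?h i < ?n" using hS by (metis atLeastLessThan_iff bij_betwE)
  have hinj: "\<And>i j. i \<in> S \<Longrightarrow> j \<in> S \<Longrightarrow> ?h i = ?h j \<Longrightarrow> i = j" using gh by metis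
  have A: "?A \<in> carrier_mat ?n ?n" by simp
  have "det ?A \<noteq> 0" using d sdet_transport[OF g] by simp
  then have "?A \<in> Units (ring_mat TYPE(real) ?n undefined)" by (rule det_non_zero_imp_unit[OF A])
  then obtain B where B: "B \<in> carrier_mat ?n ?n" and AB: "?A * B = 1\<^sub>m ?n"
    unfolding Units_def by (auto simp: ring_mat_simps)
  define N where "N = (\<lambda>i j. if i \<in> S \<and> j \<in> S then B $$ (?h i, ?h j) else 0)"
  have "\<forall>i\<in>S. \<forall>j\<in>S. (\<Sum>k\<in>S. A i k * N k j) = (if i = j then 1 else 0)"
  proof (intro ballI)
    fix i j assume i: "i \<in> S" and j: "j \<in> S"
    have gk: "\<And>k. k < ?n \<Longrightarrow> g k \<in> S" using g bij_betwE by fastforce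
    have "(\<Sum>k\<in>S. A i k * N k j) = (\<Sum>k=0..<?n. A i (g k) * N (g k) j)"
      by (rule sum_transport[OF g])
    also have "\<dots> = (\<Sum>k=0..<?n. ?A $$ (?h i, k) * B $$ (k, ?h j))"
      using hlt[OF i] gk hg gh[OF i] j by (intro sum.cong refl) (simp add: N_def)
    also have "\<dots> = (?A * B) $$ (?h i, ?h j)"
      using hlt[OF i] hlt[OF j] B by (simp add: scalar_prod_def)
    also have "\<dots> = (if i = j then 1 else 0)"
      unfolding AB using hlt[OF i] hlt[OF j] hinj[OF i j] by auto
    finally show "(\<Sum>k\<in>S. A i k * N k j) = (if i = j then 1 else 0)" .
  qed
  moreover have "\<forall>i j. i \<notin> S \<or> j \<notin> S \<longrightarrow> N i j = 0" by (simp add: N_def)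
  ultimately show ?thesis by blast
qed

lemma smat_inv_spec:
  assumes finS: "finite S" and d: "sdet S A \<noteq> 0"
  shows "\<forall>i\<in>S. \<forall>j\<in>S. (\<Sum>k\<in>S. A i k * smat_inv S A k j) = (if i = j then 1 else 0)"
proof -
  let ?P = "\<lambda>N. (\<forall>i\<in>S. \<forall>j\<in>S. (\<Sum>k\<in>S. A i k * N k j) = (if i = j then 1 else 0))
            \<and> (\<forall>i j. i \<notin> S \<or> j \<notin> S \<longrightarrow> N i j = 0)"
  obtain N where N: "?P N" using smat_right_inv_ex[OF finS d] by blast
  have uniq: "N2 = N" if N2: "?P N2" for N2
  proof (rule ext, rule ext)
    fix k j
    show "N2 k j = N k j"
    proof (cases "k \<in> S \<and> j \<in> S")
      case False
      then have "N2 k j = 0" "N k j = 0" using N N2 by blast+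
      then show ?thesis by simp
    next
      case True
      have ker: "(\<Sum>l\<in>S. A i l * (N2 l j - N l j)) = 0" if i: "i \<in> S" for i
      proof -
        have "(\<Sum>l\<in>S. A i l * (N2 l j - N l j)) = (\<Sum>l\<in>S. A i l * N2 l j) - (\<Sum>l\<in>S. A i l * N l j)"
          by (simp add: right_diff_distrib sum_subtractf)
        also have "\<dots> = 0" using N N2 i True by simp
        finally show ?thesis .
      qed
      have "N2 k j - N k j = 0"
        by (rule sdet_kernel[OF finS d, of "\<lambda>l. N2 l j - N l j" k]) (use ker True in simp_all)
      then show ?thesis by simp
    qed
  qed
  have "?P (smat_inv S A)" unfolding smat_inv_def
    by (rule theI[of ?P N, OF N uniq])
  then show ?thesis by blast
qed

lemma smat_mult_assoc:
  "smat_mult S (smat_mult S X Y) Z = smat_mult S X (smat_mult S Y Z)"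
proof (rule ext, rule ext)
  fix i j
  have "smat_mult S (smat_mult S X Y) Z i j = (\<Sum>k\<in>S. \<Sum>l\<in>S. X i l * Y l k * Z k j)"
    unfolding smat_mult_def by (simp only: sum_distrib_right)
  also have "\<dots> = (\<Sum>l\<in>S. \<Sum>k\<in>S. X i l * Y l k * Z k j)" by (rule sum.swap)
  also have "\<dots> = smat_mult S X (smat_mult S Y Z) i j"
    unfolding smat_mult_def by (simp only: sum_distrib_left mult.assoc)
  finally show "smat_mult S (smat_mult S X Y) Z i j = smat_mult S X (smat_mult S Y Z) i j" .
qed

lemma trace_cyc: "smat_trace S (smat_mult S X Y) = smat_trace S (smat_mult S Y X)"
proof -
  have "smat_trace S (smat_mult S X Y) = (\<Sum>i\<in>S. \<Sum>k\<in>S. X i k * Y k i)"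
    unfolding smat_trace_def smat_mult_def by simp
  also have "\<dots> = (\<Sum>k\<in>S. \<Sum>i\<in>S. X i k * Y k i)" by (rule sum.swap)
  also have "\<dots> = smat_trace S (smat_mult S Y X)"
    unfolding smat_trace_def smat_mult_def by (simp add: mult.commute)
  finally show ?thesis .
qed

lemma trace_minus:
  "smat_trace S (smat_mult S (smat_minus X Y) Z) = smat_trace S (smat_mult S X Z) - smat_trace S (smat_mult S Y Z)"
  unfolding smat_trace_def smat_mult_def smat_minus_def
  by (simp add: left_diff_distrib sum_subtractf)

lemma trace_CC:
  "(\<Sum>i\<in>S. \<Sum>j\<in>S. smat_mult S N B1 i j * smat_mult S N B2 j i) =
   smat_trace S (smat_mult S (smat_mult S (smat_mult S B1 N) B2) N)"
proof -
  have "(\<Sum>i\<in>S. \<Sum>j\<in>S. smat_mult S N B1 i j * smat_mult S N B2 j i) =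
     smat_trace S (smat_mult S (smat_mult S N B1) (smat_mult S N B2))"
    unfolding smat_trace_def smat_mult_def[of S "smat_mult S N B1"] by simp
  also have "\<dots> = smat_trace S (smat_mult S N (smat_mult S B1 (smat_mult S N B2)))"
    by (simp only: smat_mult_assoc)
  also have "\<dots> = smat_trace S (smat_mult S (smat_mult S B1 (smat_mult S N B2)) N)"
    by (rule trace_cyc)
  also have "\<dots> = smat_trace S (smat_mult S (smat_mult S (smat_mult S B1 N) B2) N)"
    by (simp only: smat_mult_assoc)
  finally show ?thesis .
qed

lemma trace_C:
  "(\<Sum>i\<in>S. smat_mult S N B i i) = smat_trace S (smat_mult S B N)"
  using trace_cyc[of S N B] unfolding smat_trace_def by simp

lemma rst_exp_cong:
  assumes "\<And>T. T \<in> spanning_trees V E \<Longrightarrow> f T = g T"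
  shows "rst_expectation V E w f = rst_expectation V E w g"
  unfolding rst_expectation_def using assms by (simp cong: sum.cong)

lemma laplacian_cong:
  assumes "\<And>e. e \<in> E \<Longrightarrow> c e = c' e"
  shows "laplacian V E c = laplacian V E c'"
  unfolding laplacian_def Let_def using assms by (intro ext) (simp cong: sum.cong if_cong)

lemma laplacian_add:
  "laplacian V E (\<lambda>e. w e * (a e + b e)) i j = laplacian V E (\<lambda>e. w e * a e) i j + laplacian V E (\<lambda>e. w e * b e) i j"
proof -
  have "(\<lambda>e. w e * (a e + b e)) = (\<lambda>e. w e * a e + 1 * (w e * b e))" by (simp add: algebra_simps)
  then show ?thesis using laplacian_lin[of V E "\<lambda>e. w e * a e" 1 "\<lambda>e. w e * b e" i j] by simp
qed

lemma smat_mult_add: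
  assumes "\<And>k j. B k j = B1 k j + B2 k j"
  shows "smat_mult S N B i j = smat_mult S N B1 i j + smat_mult S N B2 i j"
  unfolding smat_mult_def assms by (simp add: distrib_left sum.distrib)

lemma exp_formula:
  assumes Zne: "Z \<noteq> 0" and Z: "Z = (\<Sum>T\<in>spanning_trees V E. tree_weight w T)"
    and m: "(\<Sum>T\<in>spanning_trees V E. tree_weight w T * f T) = Z * \<mu>"
  shows "rst_expectation V E w f = \<mu>"
  unfolding rst_expectation_def using m Zne Z[symmetric] by simp

lemma var_sum:
  fixes t f g :: "'b \<Rightarrow> real" and \<mu> \<nu> :: real
  assumes fin: "finite X"
  shows "(\<Sum>T\<in>X. t T * ((f T - \<mu>) * (g T - \<nu>))) =
     (\<Sum>T\<in>X. t T * (f T * g T)) - \<mu> * (\<Sum>T\<in>X. t T * g T) - \<nu> * (\<Sum>T\<in>X. t T * f T) + \<mu> * \<nu> * (\<Sum>T\<in>X. t T)"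
proof -
  have "(\<Sum>T\<in>X. t T * ((f T - \<mu>) * (g T - \<nu>))) =
     (\<Sum>T\<in>X. t T * (f T * g T) - \<mu> * (t T * g T) - \<nu> * (t T * f T) + \<mu> * \<nu> * t T)"
    by (intro sum.cong refl) (simp add: algebra_simps)
  also have "\<dots> = (\<Sum>T\<in>X. t T * (f T * g T)) - \<mu> * (\<Sum>T\<in>X. t T * g T) - \<nu> * (\<Sum>T\<in>X. t T * f T) + \<mu> * \<nu> * (\<Sum>T\<in>X. t T)"
    by (simp add: sum.distrib sum_subtractf sum_distrib_left)
  finally show ?thesis .
qed

lemma cov_formula:
  assumes Zne: "Z \<noteq> 0" and Z: "Z = (\<Sum>T\<in>spanning_trees V E. tree_weight w T)"
    and fin: "finite (spanning_trees V E)"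
    and mf: "(\<Sum>T\<in>spanning_trees V E. tree_weight w T * f T) = Z * \<mu>"
    and mg: "(\<Sum>T\<in>spanning_trees V E. tree_weight w T * g T) = Z * \<nu>"
    and mfg: "(\<Sum>T\<in>spanning_trees V E. tree_weight w T * (f T * g T)) = Z * (\<mu> * \<nu> + c)"
  shows "rst_covariance V E w f g = c"
proof -
  have ef: "rst_expectation V E w f = \<mu>" by (rule exp_formula[OF Zne Z mf])
  have eg: "rst_expectation V E w g = \<nu>" by (rule exp_formula[OF Zne Z mg])
  have "(\<Sum>T\<in>spanning_trees V E. tree_weight w T * ((f T - \<mu>) * (g T - \<nu>))) = Z * c"
    unfolding var_sum[OF fin] mf mg mfg Z[symmetric] by (simp add: algebra_simps)
  then show ?thesis unfolding rst_covariance_def ef eg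
    by (rule exp_formula[OF Zne Z])
qed

lemma var_is_cov: "rst_variance V E w f = rst_covariance V E w f f"
  unfolding rst_variance_def rst_covariance_def by (simp add: power2_eq_square)

lemma rst_var_cong:
  assumes "\<And>T. T \<in> spanning_trees V E \<Longrightarrow> f T = g T"
  shows "rst_variance V E w f = rst_variance V E w g"
proof -
  have "rst_expectation V E w f = rst_expectation V E w g" by (rule rst_exp_cong[OF assms])
  then show ?thesis unfolding rst_variance_def using assms by (intro rst_exp_cong) simp
qed

lemma rst_cov_cong:
  assumes "\<And>T. T \<in> spanning_trees V E \<Longrightarrow> f T = f' T" "\<And>T. T \<in> spanning_trees V E \<Longrightarrow> g T = g' T"
  shows "rst_covariance V E w f g = rst_covariance V E w f' g'"
proof -
  have "rst_expectation V E w f = rst_expectation V E w f'" by (rule rst_exp_cong[OF assms(1)])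
  moreover have "rst_expectation V E w g = rst_expectation V E w g'" by (rule rst_exp_cong[OF assms(2)])
  ultimately show ?thesis unfolding rst_covariance_def using assms by (intro rst_exp_cong) simp
qed

theorem theorem3:
  fixes V :: "'a set" and E :: "'a set set" and w \<omega> :: "'a set \<Rightarrow> real" and r v :: 'a
  assumes graph: "simple_graph V E"
    and conn: "connected_on V E"
    and wpos: "\<forall>e\<in>E. w e > 0"
    and r: "r \<in> V"
    and v: "v \<in> V"
  shows "rst_expectation V E w (\<lambda>T. wdeg \<omega> T v)
           = smat_trace (V - {r})
               (smat_mult (V - {r}) (lap_v V E w \<omega> 1 v) (smat_inv (V - {r}) (lap_G V E w)))
       \<and> rst_variance V E w (\<lambda>T. wdeg \<omega> T v)
           = smat_trace (V - {r})
               (smat_mult (V - {r})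
                 (smat_minus (lap_v V E w \<omega> 2 v)
                    (smat_mult (V - {r})
                       (smat_mult (V - {r}) (lap_v V E w \<omega> 1 v) (smat_inv (V - {r}) (lap_G V E w)))
                       (lap_v V E w \<omega> 1 v)))
                 (smat_inv (V - {r}) (lap_G V E w)))
       \<and> (\<forall>u\<in>V. u \<noteq> v \<longrightarrow>
           rst_covariance V E w (\<lambda>T. wdeg \<omega> T v) (\<lambda>T. wdeg \<omega> T u)
           = smat_trace (V - {r})
               (smat_mult (V - {r})
                 (smat_minus (lap_vu V E w \<omega> v u)
                    (smat_mult (V - {r})
                       (smat_mult (V - {r}) (lap_v V E w \<omega> 1 v) (smat_inv (V - {r}) (lap_G V E w)))
                       (lap_v V E w \<omega> 1 u)))
                 (smat_inv (V - {r}) (lap_G V E w))))"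
proof -
  let ?S = "V - {r}"
  let ?ST = "spanning_trees V E"
  define N where "N = smat_inv ?S (lap_G V E w)"
  define Z where "Z = (\<Sum>T\<in>?ST. tree_weight w T)"
  have finV: "finite V" using simple_graph_finite[OF graph] .
  have finS: "finite ?S" using finV by simp
  have finE: "finite E" using simple_graph_finite_E[OF graph] .
  have finST: "finite ?ST" using finite_ST[OF graph] .
  have TE: "T \<subseteq> E" if T: "T \<in> ?ST" for T using T unfolding spanning_trees_def by blast
  have finT: "finite T" if T: "T \<in> ?ST" for T using TE[OF T] finE finite_subset by blast
  have ZA: "sdet ?S (laplacian V E w) = Z"
    unfolding Z_def tree_weight_def by (rule matrix_tree[OF graph r])
  have Zpos: "Z > 0"
  proof -
    obtain \<phi> where p: "\<phi> \<in> pfun V E r" using exists_pfun[OF graph r subset_refl conn] by blast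
    have ne: "?ST \<noteq> {}" using pfun_tree[OF p] by blast
    have "tree_weight w T > 0" if T: "T \<in> ?ST" for T
      unfolding tree_weight_def using TE[OF T] wpos by (intro prod_pos) blast
    then show ?thesis unfolding Z_def using finST ne by (intro sum_pos) auto
  qed
  have Zne: "Z \<noteq> 0" using Zpos by simp
  have inv: "\<forall>i\<in>?S. \<forall>j\<in>?S. (\<Sum>k\<in>?S. laplacian V E w i k * N k j) = (if i = j then 1 else 0)"
    using smat_inv_spec[OF finS, of "laplacian V E w"] ZA Zne unfolding N_def lap_G_def by simp
  define Bs where "Bs s = laplacian V E (\<lambda>e. w e * s e)" for s :: "'a set \<Rightarrow> real"
  define Cs where "Cs s = smat_mult ?S N (Bs s)" for s
  define fs where "fs s T = (\<Sum>e\<in>T. s e)" for s :: "'a set \<Rightarrow> real" and T :: "'a set set"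
  define \<mu> where "\<mu> s = (\<Sum>i\<in>?S. Cs s i i)" for s
  define TT where "TT s s' = (\<Sum>i\<in>?S. \<Sum>j\<in>?S. Cs s i j * Cs s' j i)" for s s'
  have CsE: "Cs s = smat_mult (V - {r}) N (laplacian V E (\<lambda>e. w e * s e))" for s
    unfolding Cs_def Bs_def ..
  have m1: "(\<Sum>T\<in>?ST. tree_weight w T * fs s T) = Z * \<mu> s" for s
    unfolding fs_def \<mu>_def by (rule moments(1)[OF graph r inv CsE Z_def])
  have m2: "(\<Sum>T\<in>?ST. tree_weight w T * ((fs s T)^2 - (\<Sum>e\<in>T. (s e)^2))) = Z * ((\<mu> s)^2 - TT s s)" for s
    unfolding fs_def \<mu>_def TT_def by (rule moments(2)[OF graph r inv CsE Z_def])
  have tr\<mu>: "\<mu> s = smat_trace ?S (smat_mult ?S (Bs s) N)" for s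
    unfolding \<mu>_def Cs_def by (rule trace_C)
  have trTT: "TT s s' = smat_trace ?S (smat_mult ?S (smat_mult ?S (smat_mult ?S (Bs s) N) (Bs s')) N)" for s s'
    unfolding TT_def Cs_def by (rule trace_CC)
  have prod: "(\<Sum>T\<in>?ST. tree_weight w T * (fs a T * fs b T)) = Z * (\<mu> a * \<mu> b + (\<mu> (\<lambda>e. a e * b e) - TT a b))"
    for a b
  proof -
    define c where "c = (\<lambda>e. a e + b e)"
    define p where "p = (\<lambda>e. a e * b e)"
    have Cc: "Cs c i j = Cs a i j + Cs b i j" for i j
      unfolding Cs_def Bs_def c_def by (rule smat_mult_add) (rule laplacian_add)
    have \<mu>c: "\<mu> c = \<mu> a + \<mu> b" unfolding \<mu>_def Cc by (simp add: sum.distrib)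
    have Tba: "TT b a = TT a b" unfolding TT_def
      by (subst sum.swap) (simp add: mult.commute)
    have Tc: "TT c c = TT a a + 2 * TT a b + TT b b"
    proof -
      have "TT c c = TT a a + TT a b + TT b a + TT b b"
        unfolding TT_def Cc by (simp add: algebra_simps sum.distrib)
      then show ?thesis using Tba by simp
    qed
    let ?w = "tree_weight w"
    let ?q = "\<lambda>s T. (\<Sum>e\<in>T. (s e)^2)"
    have pt: "?w T * ((fs c T)^2 - ?q c T) =
        ?w T * ((fs a T)^2 - ?q a T) + ?w T * ((fs b T)^2 - ?q b T) + 2 * (?w T * (fs a T * fs b T)) - 2 * (?w T * fs p T)"
      for T
    proof -
      have fc: "fs c T = fs a T + fs b T" unfolding fs_def c_def by (simp add: sum.distrib)
      have qc: "?q c T = ?q a T + ?q b T + 2 * fs p T"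
        unfolding fs_def c_def p_def by (simp add: power2_sum sum.distrib sum_distrib_left mult.assoc)
      show ?thesis unfolding fc qc by (simp add: algebra_simps power2_sum)
    qed
    have "Z * ((\<mu> c)^2 - TT c c) = Z * ((\<mu> a)^2 - TT a a) + Z * ((\<mu> b)^2 - TT b b)
        + 2 * (\<Sum>T\<in>?ST. ?w T * (fs a T * fs b T)) - 2 * (Z * \<mu> p)"
    proof -
      have "Z * ((\<mu> c)^2 - TT c c) = (\<Sum>T\<in>?ST. ?w T * ((fs c T)^2 - ?q c T))" using m2[of c] by simp
      also have "\<dots> = (\<Sum>T\<in>?ST. ?w T * ((fs a T)^2 - ?q a T)) + (\<Sum>T\<in>?ST. ?w T * ((fs b T)^2 - ?q b T))
          + 2 * (\<Sum>T\<in>?ST. ?w T * (fs a T * fs b T)) - 2 * (\<Sum>T\<in>?ST. ?w T * fs p T)"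
        unfolding pt by (simp add: sum.distrib sum_subtractf sum_distrib_left)
      also have "\<dots> = Z * ((\<mu> a)^2 - TT a a) + Z * ((\<mu> b)^2 - TT b b)
          + 2 * (\<Sum>T\<in>?ST. ?w T * (fs a T * fs b T)) - 2 * (Z * \<mu> p)"
        using m2[of a] m2[of b] m1[of p] by simp
      finally show ?thesis .
    qed
    then have "2 * (\<Sum>T\<in>?ST. ?w T * (fs a T * fs b T)) = 2 * (Z * (\<mu> a * \<mu> b + (\<mu> p - TT a b)))"
      unfolding \<mu>c Tc by (simp add: algebra_simps power2_sum)
    then show ?thesis unfolding p_def by simp
  qed
  define sv where "sv = (\<lambda>e. if v \<in> e then \<omega> e else 0)"
  have wd: "wdeg \<omega> T x = fs (\<lambda>e. if x \<in> e then \<omega> e else 0) T" if T: "T \<in> ?ST" for T x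
    unfolding wdeg_def fs_def using finT[OF T] by (simp add: sum.inter_filter)
  have L1: "lap_v V E w \<omega> 1 x = Bs (\<lambda>e. if x \<in> e then \<omega> e else 0)" for x
  proof -
    have "(\<lambda>e. if x \<in> e then w e * \<omega> e ^ 1 else 0) = (\<lambda>e. w e * (if x \<in> e then \<omega> e else 0))"
      by (simp add: fun_eq_iff)
    then show ?thesis unfolding lap_v_def Bs_def by simp
  qed
  have L2: "lap_v V E w \<omega> 2 v = Bs (\<lambda>e. sv e * sv e)"
  proof -
    have "(\<lambda>e. if v \<in> e then w e * \<omega> e ^ 2 else 0) = (\<lambda>e. w e * (sv e * sv e))"
      by (simp add: fun_eq_iff sv_def power2_eq_square)
    then show ?thesis unfolding lap_v_def Bs_def by simp
  qed
  have wdv: "\<And>T. T \<in> ?ST \<Longrightarrow> wdeg \<omega> T v = fs sv T" unfolding sv_def by (rule wd)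
  have part1: "rst_expectation V E w (\<lambda>T. wdeg \<omega> T v)
      = smat_trace ?S (smat_mult ?S (lap_v V E w \<omega> 1 v) (smat_inv ?S (lap_G V E w)))"
  proof -
    have "rst_expectation V E w (\<lambda>T. wdeg \<omega> T v) = rst_expectation V E w (fs sv)"
      by (rule rst_exp_cong) (rule wdv)
    also have "\<dots> = \<mu> sv" by (rule exp_formula[OF Zne Z_def m1])
    finally show ?thesis unfolding tr\<mu> L1 N_def sv_def .
  qed
  have part2: "rst_variance V E w (\<lambda>T. wdeg \<omega> T v)
           = smat_trace (V - {r})
               (smat_mult (V - {r})
                 (smat_minus (lap_v V E w \<omega> 2 v)
                    (smat_mult (V - {r})
                       (smat_mult (V - {r}) (lap_v V E w \<omega> 1 v) (smat_inv (V - {r}) (lap_G V E w)))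
                       (lap_v V E w \<omega> 1 v)))
                 (smat_inv (V - {r}) (lap_G V E w)))"
  proof -
    have "rst_variance V E w (\<lambda>T. wdeg \<omega> T v) = rst_variance V E w (fs sv)"
      by (rule rst_var_cong) (rule wdv)
    also have "\<dots> = rst_covariance V E w (fs sv) (fs sv)" by (rule var_is_cov)
    also have "\<dots> = \<mu> (\<lambda>e. sv e * sv e) - TT sv sv"
      by (rule cov_formula[OF Zne Z_def finST m1 m1 prod])
    finally show ?thesis
      unfolding trace_minus tr\<mu> trTT L1 L2 N_def[symmetric] sv_def .
  qed
  have part3: "rst_covariance V E w (\<lambda>T. wdeg \<omega> T v) (\<lambda>T. wdeg \<omega> T u)
           = smat_trace (V - {r})
               (smat_mult (V - {r})
                 (smat_minus (lap_vu V E w \<omega> v u)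
                    (smat_mult (V - {r})
                       (smat_mult (V - {r}) (lap_v V E w \<omega> 1 v) (smat_inv (V - {r}) (lap_G V E w)))
                       (lap_v V E w \<omega> 1 u)))
                 (smat_inv (V - {r}) (lap_G V E w)))"
    if u: "u \<in> V" and uv: "u \<noteq> v" for u
  proof -
    define su where "su = (\<lambda>e. if u \<in> e then \<omega> e else 0)"
    have wdu: "\<And>T. T \<in> ?ST \<Longrightarrow> wdeg \<omega> T u = fs su T" unfolding su_def by (rule wd)
    have Lvu: "lap_vu V E w \<omega> v u = Bs (\<lambda>e. sv e * su e)"
      unfolding lap_vu_def Bs_def
    proof (rule laplacian_cong)
      fix e assume e: "e \<in> E"
      obtain x y where xy: "e = {x, y}" using simple_graph_edge[OF graph e] by metis
      show "(if e = {u, v} then w e * \<omega> e ^ 2 else 0) = w e * (sv e * su e)"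
      proof (cases "e = {u, v}")
        case True then show ?thesis by (simp add: sv_def su_def power2_eq_square)
      next
        case False
        then have "\<not> (v \<in> e \<and> u \<in> e)" using xy uv by auto
        then show ?thesis using False by (auto simp: sv_def su_def)
      qed
    qed
    have "rst_covariance V E w (\<lambda>T. wdeg \<omega> T v) (\<lambda>T. wdeg \<omega> T u) = rst_covariance V E w (fs sv) (fs su)"
      by (rule rst_cov_cong[OF wdv wdu])
    also have "\<dots> = \<mu> (\<lambda>e. sv e * su e) - TT sv su"
      by (rule cov_formula[OF Zne Z_def finST m1 m1 prod])
    finally show ?thesis
      unfolding trace_minus tr\<mu> trTT L1 Lvu N_def[symmetric] sv_def su_def .
  qed
  show ?thesis using part1 part2 part3 by blast
qed

end
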